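(* Let $\Omega\subset\mathbb{R}^3$ be a bounded domain with $C^2$ boundary, unit outer normal $\nu$, and $d=\sup_{x,y\in\Omega}|x-y|$; let $\epsilon_0,\mu_0>0$, $\alpha\in L^\infty(\partial\Omega)$, and let $J_\epsilon,J_\mu\in[H^1(\Omega)]^3$ be real-valued with $\mathrm{supp}\,J_\epsilon,\mathrm{supp}\,J_\mu\subset\Omega$. For $\omega\in\mathbb{C}$, $x\in\partial\Omega$, $y\in\Omega$ set $$G(x,y,\omega)=(i\omega\mu_0J_\epsilon(y)+\mathrm{curl}\,J_\mu(y))\times\nu(x)-\alpha(x)\big\{F(y,\omega)-[F(y,\omega)\cdot\nu(x)]\nu(x)\big\},\quad F(y,\omega)=-i\omega\epsilon_0J_\mu(y)+\mathrm{curl}\,J_\epsilon(y),$$ and define the entire function $$I_0(k)=2\int_0^k\int_{\partial\Omega}\Big(\int_\Omega\frac{e^{i\kappa|x-y|}}{4\pi|x-y|}G(x,y,\omega)\,dy\Big)\cdot\Big(\int_\Omega\frac{e^{-i\kappa|x-y|}}{4\pi|x-y|}G(x,y,-\omega)\,dy\Big)d\Gamma(x)\,d\omega,\qquad \kappa=\omega\sqrt{\epsilon_0\mu_0},$$ where the $\omega$-integral is along any path from $0$ to $k\in\mathbb{C}$. Then for $k=k_1+ik_2$, $$|I_0(k)|\le C(1+|k|^3)\big(\|J_\epsilon\|^2_{H^1(\Omega)}+\|J_\mu\|^2_{H^1(\Omega)}\big)\exp\big(2d\sqrt{\epsilon_0\mu_0}\,|k_2|\big),$$ with $C$ independent of $k$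 and of $J_\epsilon,J_\mu$.
   Context: For real $k>0$, $I_0(k)=2\int_0^k\|E(\cdot,\omega)\times\nu-\alpha H_\tau(\cdot,\omega)\|^2_{L^2(\partial\Omega)}d\omega$ where $(E,H)$ is the radiating solution of the homogeneous-medium Maxwell system with sources $J_\mu,J_\epsilon$ and $H_\tau=H-(H\cdot\nu)\nu$. *)

theory Defs
  imports "HOL-Analysis.Analysis" "HOL-Complex_Analysis.Complex_Analysis"
begin

definition C2_boundary :: "(real^3) set \<Rightarrow> bool" where
  "C2_boundary \<Omega> \<longleftrightarrow>
     (\<forall>p\<in>frontier \<Omega>. \<exists>r>0. \<exists>(Q::real^3 \<Rightarrow> real^3) (h::real^2 \<Rightarrow> real)
        (g::real^2 \<Rightarrow> real^2) (H::real^2 \<Rightarrow> real^2^2).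
        orthogonal_transformation Q \<and>
        (\<forall>z. (h has_derivative (\<lambda>v. g z \<bullet> v)) (at z)) \<and>
        (\<forall>z. (g has_derivative (\<lambda>v. H z *v v)) (at z)) \<and>
        continuous_on UNIV H \<and>
        (\<forall>x\<in>ball p r. x \<in> \<Omega> \<longleftrightarrow>
            (Q (x - p)) $ 3 < h (vector [(Q (x - p)) $ 1, (Q (x - p)) $ 2])))"

definition outer_normal :: "(real^3) set \<Rightarrow> real^3 \<Rightarrow> real^3" where
  "outer_normal \<Omega> p = (THE n. norm n = 1 \<and>
     (\<forall>e>0. \<exists>\<delta>>0. \<forall>x\<in>ball p \<delta>.
        (x \<in> \<Omega> \<longrightarrow> n \<bullet> (x - p) \<le> e * norm (x - p)) \<and>
        (x \<notin> closure \<Omega> \<longrightarrow> n \<bullet> (x - p) \<ge> - e * norm (x - p))))"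

section \<open>Surface measure = 2-dimensional Hausdorff measure (normalised to area)\<close>

definition hausdorff2_delta :: "real \<Rightarrow> (real^3) set \<Rightarrow> ennreal" where
  "hausdorff2_delta \<delta> A = (INF C \<in> {C :: nat \<Rightarrow> (real^3) set.
        A \<subseteq> (\<Union>i. C i) \<and> (\<forall>i. bounded (C i) \<and> diameter (C i) \<le> \<delta>)}.
      (\<Sum>i. ennreal (pi / 4 * diameter (C i) ^ 2)))"

definition hausdorff2_outer :: "(real^3) set \<Rightarrow> ennreal" where
  "hausdorff2_outer A = (SUP \<delta> \<in> {0<..}. hausdorff2_delta \<delta> A)"

definition surface_measure :: "(real^3) measure" where
  "surface_measure = measure_of UNIV (sets borel) hausdorff2_outer"

coinductive smooth3 :: "(real^3 \<Rightarrow> real) \<Rightarrow> bool" where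
  "(\<forall>x. (f has_derivative (\<lambda>v. \<Sum>j\<in>UNIV. v $ j * g j x)) (at x)) \<Longrightarrow>
   (\<forall>j. smooth3 (g j)) \<Longrightarrow> smooth3 f"

definition test_fun :: "(real^3) set \<Rightarrow> (real^3 \<Rightarrow> real) \<Rightarrow> bool" where
  "test_fun \<Omega> \<phi> \<longleftrightarrow> smooth3 \<phi> \<and> (\<exists>K. compact K \<and> K \<subseteq> \<Omega> \<and> (\<forall>x. x \<notin> K \<longrightarrow> \<phi> x = 0))"

definition L2 :: "(real^3) set \<Rightarrow> (real^3 \<Rightarrow> real) \<Rightarrow> bool" where
  "L2 \<Omega> f \<longleftrightarrow> f \<in> borel_measurable (lebesgue_on \<Omega>) \<and>
                 set_integrable lebesgue \<Omega> (\<lambda>x. (f x)\<^sup>2)"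

definition is_weak_pderiv :: "(real^3) set \<Rightarrow> (real^3 \<Rightarrow> real) \<Rightarrow> 3 \<Rightarrow> (real^3 \<Rightarrow> real) \<Rightarrow> bool" where
  "is_weak_pderiv \<Omega> f j g \<longleftrightarrow>
     (\<forall>\<phi>. test_fun \<Omega> \<phi> \<longrightarrow>
        (LINT x:\<Omega>|lebesgue. f x * frechet_derivative \<phi> (at x) (axis j 1))
          = - (LINT x:\<Omega>|lebesgue. g x * \<phi> x))"

definition wpd :: "(real^3) set \<Rightarrow> (real^3 \<Rightarrow> real) \<Rightarrow> 3 \<Rightarrow> real^3 \<Rightarrow> real" where
  "wpd \<Omega> f j = (SOME g. L2 \<Omega> g \<and> is_weak_pderiv \<Omega> f j g)"

definition in_H1 :: "(real^3) set \<Rightarrow> (real^3 \<Rightarrow> real^3) \<Rightarrow> bool" where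
  "in_H1 \<Omega> J \<longleftrightarrow> (\<forall>i. L2 \<Omega> (\<lambda>x. J x $ i) \<and>
      (\<forall>j. \<exists>g. L2 \<Omega> g \<and> is_weak_pderiv \<Omega> (\<lambda>x. J x $ i) j g))"

definition H1_norm_sq :: "(real^3) set \<Rightarrow> (real^3 \<Rightarrow> real^3) \<Rightarrow> real" where
  "H1_norm_sq \<Omega> J = (\<Sum>i\<in>UNIV. (LINT x:\<Omega>|lebesgue. (J x $ i)\<^sup>2) +
       (\<Sum>j\<in>UNIV. LINT x:\<Omega>|lebesgue. (wpd \<Omega> (\<lambda>y. J y $ i) j x)\<^sup>2))"

definition wcurl :: "(real^3) set \<Rightarrow> (real^3 \<Rightarrow> real^3) \<Rightarrow> real^3 \<Rightarrow> real^3" where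
  "wcurl \<Omega> J x = vector
     [wpd \<Omega> (\<lambda>y. J y $ 3) 2 x - wpd \<Omega> (\<lambda>y. J y $ 2) 3 x,
      wpd \<Omega> (\<lambda>y. J y $ 1) 3 x - wpd \<Omega> (\<lambda>y. J y $ 3) 1 x,
      wpd \<Omega> (\<lambda>y. J y $ 2) 1 x - wpd \<Omega> (\<lambda>y. J y $ 1) 2 x]"

definition supp_in :: "(real^3) set \<Rightarrow> (real^3 \<Rightarrow> real^3) \<Rightarrow> bool" where
  "supp_in \<Omega> J \<longleftrightarrow> (\<exists>K. compact K \<and> K \<subseteq> \<Omega> \<and> (\<forall>x. x \<notin> K \<longrightarrow> J x = 0))"

definition Linfty_boundary :: "(real^3) set \<Rightarrow> (real^3 \<Rightarrow> complex) \<Rightarrow> bool" where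
  "Linfty_boundary \<Omega> \<alpha> \<longleftrightarrow> set_borel_measurable surface_measure (frontier \<Omega>) \<alpha> \<and>
     (\<exists>M. AE x in surface_measure. x \<in> frontier \<Omega> \<longrightarrow> cmod (\<alpha> x) \<le> M)"

definition cv :: "real^3 \<Rightarrow> complex^3" where
  "cv v = (\<chi> i. complex_of_real (v $ i))"

text \<open>Bilinear (non-Hermitian) dot product and cross product.\<close>
definition cdot :: "complex^3 \<Rightarrow> complex^3 \<Rightarrow> complex" where
  "cdot a b = (\<Sum>i\<in>UNIV. a $ i * b $ i)"

definition ccross :: "complex^3 \<Rightarrow> complex^3 \<Rightarrow> complex^3" where
  "ccross a b = vector [a$2 * b$3 - a$3 * b$2, a$3 * b$1 - a$1 * b$3, a$1 * b$2 - a$2 * b$1]"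

definition Ffun :: "(real^3) set \<Rightarrow> real \<Rightarrow> (real^3 \<Rightarrow> real^3) \<Rightarrow> (real^3 \<Rightarrow> real^3)
                    \<Rightarrow> real^3 \<Rightarrow> complex \<Rightarrow> complex^3" where
  "Ffun \<Omega> \<epsilon>0 Je Jm y \<omega> = (- \<i> * \<omega> * complex_of_real \<epsilon>0) *s cv (Jm y) + cv (wcurl \<Omega> Je y)"

definition Gfun :: "(real^3) set \<Rightarrow> real \<Rightarrow> real \<Rightarrow> (real^3 \<Rightarrow> complex)
                    \<Rightarrow> (real^3 \<Rightarrow> real^3) \<Rightarrow> (real^3 \<Rightarrow> real^3)
                    \<Rightarrow> real^3 \<Rightarrow> real^3 \<Rightarrow> complex \<Rightarrow> complex^3" where
  "Gfun \<Omega> \<epsilon>0 \<mu>0 \<alpha> Je Jm x y \<omega> =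
     (let \<nu> = cv (outer_normal \<Omega> x); F = Ffun \<Omega> \<epsilon>0 Je Jm y \<omega> in
      ccross ((\<i> * \<omega> * complex_of_real \<mu>0) *s cv (Je y) + cv (wcurl \<Omega> Jm y)) \<nu>
      - \<alpha> x *s (F - cdot F \<nu> *s \<nu>))"

definition I0 :: "(real^3) set \<Rightarrow> real \<Rightarrow> real \<Rightarrow> (real^3 \<Rightarrow> complex)
                  \<Rightarrow> (real^3 \<Rightarrow> real^3) \<Rightarrow> (real^3 \<Rightarrow> real^3) \<Rightarrow> complex \<Rightarrow> complex" where
  "I0 \<Omega> \<epsilon>0 \<mu>0 \<alpha> Je Jm k =
     2 * contour_integral (linepath 0 k) (\<lambda>\<omega>.
       let \<kappa> = \<omega> * complex_of_real (sqrt (\<epsilon>0 * \<mu>0)) in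
       LINT x:frontier \<Omega>|surface_measure.
         cdot (\<chi> i. LINT y:\<Omega>|lebesgue.
                 exp (\<i> * \<kappa> * dist x y) / (4 * pi * dist x y) * Gfun \<Omega> \<epsilon>0 \<mu>0 \<alpha> Je Jm x y \<omega> $ i)
              (\<chi> i. LINT y:\<Omega>|lebesgue.
                 exp (- \<i> * \<kappa> * dist x y) / (4 * pi * dist x y) * Gfun \<Omega> \<epsilon>0 \<mu>0 \<alpha> Je Jm x y (- \<omega>) $ i))"

end

theory Submission
  imports Defs
begin

definition fincover :: "real \<Rightarrow> (real^3) set \<Rightarrow> real \<Rightarrow> bool" where
  "fincover \<delta> A B \<longleftrightarrow> (\<exists>(I::nat set) c. finite I \<and> A \<subseteq> (\<Union>i\<in>I. c i) \<and>
      (\<forall>i\<in>I. bounded (c i) \<and> diameter (c i) \<le> \<delta>) \<and>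
      (\<Sum>i\<in>I. pi / 4 * diameter (c i) ^ 2) \<le> B)"

lemma fincover_mono: "A \<subseteq> A' \<Longrightarrow> fincover \<delta> A' B \<Longrightarrow> fincover \<delta> A B"
  unfolding fincover_def by blast

lemma fincover_empty: "fincover \<delta> {} 0"
  unfolding fincover_def by (intro exI[of _ "{}"]) auto

lemma fincover_union:
  assumes a: "fincover \<delta> A a" and b: "fincover \<delta> B b"
  shows "fincover \<delta> (A \<union> B) (a + b)"
proof -
  obtain Ia :: "nat set" and ca where Ia: "finite Ia" "A \<subseteq> (\<Union>i\<in>Ia. ca i)" "\<forall>i\<in>Ia. bounded (ca i) \<and> diameter (ca i) \<le> \<delta>"
      "(\<Sum>i\<in>Ia. pi / 4 * diameter (ca i) ^ 2) \<le> a"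
    using a unfolding fincover_def by blast
  obtain Ib :: "nat set" and cb where Ib: "finite Ib" "B \<subseteq> (\<Union>i\<in>Ib. cb i)" "\<forall>i\<in>Ib. bounded (cb i) \<and> diameter (cb i) \<le> \<delta>"
      "(\<Sum>i\<in>Ib. pi / 4 * diameter (cb i) ^ 2) \<le> b"
    using b unfolding fincover_def by blast
  define I where "I = (\<lambda>i. 2 * i) ` Ia \<union> (\<lambda>i. 2 * i + 1) ` Ib"
  define c where "c j = (if even j then ca (j div 2) else cb (j div 2))" for j
  have disj: "(\<lambda>i. 2 * i) ` Ia \<inter> (\<lambda>i. 2 * i + 1) ` Ib = {}" by auto presburger
  have inj1: "inj_on (\<lambda>i::nat. 2 * i) Ia" by (auto simp: inj_on_def)
  have inj2: "inj_on (\<lambda>i::nat. 2 * i + 1) Ib" by (auto simp: inj_on_def)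
  have "(\<Sum>j\<in>I. pi / 4 * diameter (c j) ^ 2)
      = (\<Sum>j\<in>(\<lambda>i. 2 * i) ` Ia. pi / 4 * diameter (c j) ^ 2) + (\<Sum>j\<in>(\<lambda>i. 2 * i + 1) ` Ib. pi / 4 * diameter (c j) ^ 2)"
    unfolding I_def using Ia(1) Ib(1) disj by (intro sum.union_disjoint) auto
  also have "\<dots> = (\<Sum>i\<in>Ia. pi / 4 * diameter (ca i) ^ 2) + (\<Sum>i\<in>Ib. pi / 4 * diameter (cb i) ^ 2)"
    using inj1 inj2 by (simp add: sum.reindex c_def)
  finally have s: "(\<Sum>j\<in>I. pi / 4 * diameter (c j) ^ 2) \<le> a + b" using Ia(4) Ib(4) by linarith
  have cov: "A \<union> B \<subseteq> (\<Union>j\<in>I. c j)"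
  proof
    fix x assume "x \<in> A \<union> B"
    then show "x \<in> (\<Union>j\<in>I. c j)"
    proof
      assume "x \<in> A" then obtain i where "i \<in> Ia" "x \<in> ca i" using Ia(2) by blast
      then show ?thesis unfolding I_def c_def by (intro UN_I[of "2 * i"]) auto
    next
      assume "x \<in> B" then obtain i where "i \<in> Ib" "x \<in> cb i" using Ib(2) by blast
      then show ?thesis unfolding I_def c_def by (intro UN_I[of "2 * i + 1"]) auto
    qed
  qed
  have "\<forall>j\<in>I. bounded (c j) \<and> diameter (c j) \<le> \<delta>"
    using Ia(3) Ib(3) unfolding I_def c_def by auto
  moreover have "finite I" unfolding I_def using Ia(1) Ib(1) by simp
  ultimately show ?thesis unfolding fincover_def using cov s by blast
qed

lemma fincover_UN:
  assumes "finite T" "\<And>p. p \<in> T \<Longrightarrow> fincover \<delta> (S p) (b p)"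
  shows "fincover \<delta> (\<Union>p\<in>T. S p) (\<Sum>p\<in>T. b p)"
  using assms
proof (induction T rule: finite_induct)
  case empty then show ?case by (simp add: fincover_empty)
next
  case (insert p T)
  then show ?case by (simp add: fincover_union)
qed

lemma fincover_hd:
  assumes d: "\<delta> > 0" and f: "fincover \<delta> A B"
  shows "hausdorff2_delta \<delta> A \<le> ennreal B"
proof -
  obtain I :: "nat set" and c where I: "finite I" "A \<subseteq> (\<Union>i\<in>I. c i)" "\<forall>i\<in>I. bounded (c i) \<and> diameter (c i) \<le> \<delta>"
      "(\<Sum>i\<in>I. pi / 4 * diameter (c i) ^ 2) \<le> B"
    using f unfolding fincover_def by blast
  define C where "C i = (if i \<in> I then c i else {})" for i
  have memb: "C \<in> {C :: nat \<Rightarrow> (real^3) set.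
        A \<subseteq> (\<Union>i. C i) \<and> (\<forall>i. bounded (C i) \<and> diameter (C i) \<le> \<delta>)}"
    using I d unfolding C_def by auto
  have "(\<Sum>i. ennreal (pi / 4 * diameter (C i) ^ 2)) = (\<Sum>i\<in>I. ennreal (pi / 4 * diameter (C i) ^ 2))"
    by (rule suminf_finite[OF I(1)]) (simp add: C_def)
  also have "\<dots> = ennreal (\<Sum>i\<in>I. pi / 4 * diameter (c i) ^ 2)"
    by (subst sum_ennreal) (auto simp: C_def)
  also have "\<dots> \<le> ennreal B" using I(4) by (rule ennreal_leI)
  finally have "(\<Sum>i. ennreal (pi / 4 * diameter (C i) ^ 2)) \<le> ennreal B" .
  then show ?thesis unfolding hausdorff2_delta_def
    by (rule order_trans[OF INF_lower[OF memb]])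
qed

lemma fincover_outer:
  assumes "\<And>\<delta>. \<delta> > 0 \<Longrightarrow> fincover \<delta> A B"
  shows "hausdorff2_outer A \<le> ennreal B"
  unfolding hausdorff2_outer_def using assms fincover_hd by (auto intro!: SUP_least)

lemma surface_le_outer: "emeasure surface_measure A \<le> hausdorff2_outer A"
  unfolding surface_measure_def emeasure_measure_of_conv by auto

lemma vector2_eq: "vector [a, b] = a *\<^sub>R axis 1 1 + b *\<^sub>R (axis 2 1 :: real^2)"
  by (simp add: vec_eq_iff forall_2 axis_def)

lemma vector2_0: "vector [0, 0] = (0::real^2)"
  by (simp add: vec_eq_iff forall_2)

lemma norm_vector2_le: fixes w :: "real^3" shows "norm (vector [w$1, w$2] :: real^2) \<le> norm w"
proof -
  have "(norm (vector [w$1, w$2] :: real^2))\<^sup>2 = (w$1)\<^sup>2 + (w$2)\<^sup>2"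
    unfolding power2_norm_eq_inner by (simp add: inner_vec_def sum_2 power2_eq_square)
  also have "\<dots> \<le> (norm w)\<^sup>2"
    unfolding power2_norm_eq_inner by (simp add: inner_vec_def sum_3 power2_eq_square)
  finally show ?thesis by (simp add: power2_le_iff_abs_le)
qed

lemma vector2_scale: "vector [t * a, t * b] = t *\<^sub>R (vector [a, b] :: real^2)"
  by (simp add: vec_eq_iff forall_2)

lemma vector2_diff: "vector [a - c, b - d] = (vector [a, b] :: real^2) - vector [c, d]"
  by (simp add: vec_eq_iff forall_2)

lemma inner_m: fixes w :: "real^3" and g0 :: "real^2"
  shows "vector [- (g0$1), - (g0$2), 1] \<bullet> w = w$3 - g0 \<bullet> vector [w$1, w$2]"
  by (simp add: inner_vec_def sum_3 sum_2)

context
  fixes \<Omega> :: "(real^3) set" and p :: "real^3" and r :: real and Q :: "real^3 \<Rightarrow> real^3"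
    and h :: "real^2 \<Rightarrow> real" and g :: "real^2 \<Rightarrow> real^2"
  assumes op: "open \<Omega>" and pF: "p \<in> frontier \<Omega>" and r: "r > 0"
    and Q: "orthogonal_transformation Q"
    and hd: "\<forall>z. (h has_derivative (\<lambda>v. g z \<bullet> v)) (at z)"
    and loc: "\<forall>x\<in>ball p r. x \<in> \<Omega> \<longleftrightarrow>
            (Q (x - p)) $ 3 < h (vector [(Q (x - p)) $ 1, (Q (x - p)) $ 2])"
begin

definition "ww x = Q (x - p)"
definition "uu x = (vector [ww x $ 1, ww x $ 2] :: real^2)"

lemma linQ: "linear Q" using Q by (rule orthogonal_transformation_linear)

lemma normQ: "norm (Q v) = norm v" using Q orthogonal_transformation by blast

lemma innerQ: "Q v \<bullet> Q w = v \<bullet> w" using Q by (simp add: orthogonal_transformation_def)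

lemma cont_h: "continuous_on UNIV h"
  using hd by (meson continuous_at_imp_continuous_on has_derivative_continuous)

lemma cont_ww: "continuous_on UNIV ww"
proof -
  have "bounded_linear Q" using linQ by (simp add: linear_conv_bounded_linear)
  then show ?thesis unfolding ww_def
    by (intro continuous_on_compose2[OF linear_continuous_on[of Q]] continuous_intros) auto
qed

lemma cont_uu: "continuous_on UNIV uu"
  unfolding uu_def vector2_eq using cont_ww
  by (intro continuous_intros) (auto intro: continuous_on_component)

lemma cont_huu: "continuous_on UNIV (\<lambda>x. h (uu x))"
  using continuous_on_compose[OF cont_uu continuous_on_subset[OF cont_h]] by (simp add: comp_def)

lemma loc': "x \<in> ball p r \<Longrightarrow> x \<in> \<Omega> \<longleftrightarrow> ww x $ 3 < h (uu x)"
  using loc by (simp add: ww_def uu_def)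

lemma above_not_closure:
  assumes "z \<in> ball p r" "h (uu z) < ww z $ 3"
  shows "z \<notin> closure \<Omega>"
proof
  assume zc: "z \<in> closure \<Omega>"
  define U where "U = ball p r \<inter> {x. h (uu x) < ww x $ 3}"
  have "open {x. h (uu x) < ww x $ 3}"
    using cont_huu cont_ww by (intro open_Collect_less) (auto intro: continuous_on_component)
  hence oU: "open U" unfolding U_def by auto
  have "U \<inter> \<Omega> = {}" using loc' unfolding U_def by auto
  hence "U \<inter> closure \<Omega> = {}" using open_Int_closure_eq_empty[OF oU] by blast
  moreover have "z \<in> U" using assms unfolding U_def by auto
  ultimately show False using zc by blast
qed

lemma p_notin: "p \<notin> \<Omega>" using pF op by (simp add: frontier_def interior_open)

lemma p_closure: "p \<in> closure \<Omega>" using pF by (simp add: frontier_def)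

lemma ww_p: "ww p = 0" unfolding ww_def using linQ by (simp add: linear_0)
lemma uu_p: "uu p = 0" unfolding uu_def ww_p by (simp add: vector2_0)

lemma h0: "h 0 = 0"
proof -
  have "\<not> 0 < h 0" using loc'[of p] p_notin r by (simp add: ww_p uu_p)
  moreover have "\<not> h 0 < 0" using above_not_closure[of p] p_closure r by (auto simp: ww_p uu_p)
  ultimately show ?thesis by simp
qed

lemma frontier_graph:
  assumes "x \<in> frontier \<Omega>" "x \<in> ball p r"
  shows "ww x $ 3 = h (uu x)"
proof -
  have "x \<notin> \<Omega>" "x \<in> closure \<Omega>" using assms op by (auto simp: frontier_def interior_open)
  then have "\<not> ww x $ 3 < h (uu x)" "\<not> h (uu x) < ww x $ 3"
    using loc'[OF assms(2)] above_not_closure[OF assms(2)] by blast+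
  then show ?thesis by linarith
qed

definition "mm = (vector [- (g 0 $ 1), - (g 0 $ 2), 1] :: real^3)"

lemma mm_nz: "mm \<noteq> 0" unfolding mm_def by (metis vector_3(3) zero_index zero_neq_one)

lemma mm_inner: "mm \<bullet> ww x = ww x $ 3 - g 0 \<bullet> uu x"
  unfolding mm_def uu_def by (rule inner_m)

lemma norm_uu: "norm (uu x) \<le> norm (x - p)"
  using norm_vector2_le[of "ww x"] normQ[of "x - p"] by (simp add: uu_def ww_def)

lemma norm_ww: "norm (ww x) = norm (x - p)" by (simp add: ww_def normQ)

lemma deriv0: "e > 0 \<Longrightarrow> \<exists>d>0. \<forall>y. norm y < d \<longrightarrow> \<bar>h y - g 0 \<bullet> y\<bar> \<le> e * norm y"
  using hd[rule_format, of 0] unfolding has_derivative_at_alt by (simp add: h0)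

definition "Pn n \<longleftrightarrow> norm n = 1 \<and>
     (\<forall>e>0. \<exists>\<delta>>0. \<forall>x\<in>ball p \<delta>.
        (x \<in> \<Omega> \<longrightarrow> n \<bullet> (x - p) \<le> e * norm (x - p)) \<and>
        (x \<notin> closure \<Omega> \<longrightarrow> n \<bullet> (x - p) \<ge> - e * norm (x - p)))"

lemma Pn_exists: "\<exists>n. Pn n"
proof -
  obtain n0 where n0: "Q n0 = (1 / norm mm) *\<^sub>R mm"
    using orthogonal_transformation_surj[OF Q] by (metis surjD)
  have nm: "norm mm > 0" using mm_nz by simp
  have in0: "n0 \<bullet> (x - p) = (ww x $ 3 - g 0 \<bullet> uu x) / norm mm" for x
    using innerQ[of n0 "x - p"] n0 mm_inner[of x] by (simp add: ww_def)
  have "Pn n0"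
    unfolding Pn_def
  proof (intro conjI allI impI)
    show "norm n0 = 1" using normQ[of n0] n0 nm by simp
    fix e :: real assume e: "e > 0"
    obtain dh where dh: "dh > 0" "\<And>y. norm y < dh \<Longrightarrow> \<bar>h y - g 0 \<bullet> y\<bar> \<le> (e * norm mm) * norm y"
      using deriv0[of "e * norm mm"] e nm by auto
    show "\<exists>\<delta>>0. \<forall>x\<in>ball p \<delta>. (x \<in> \<Omega> \<longrightarrow> n0 \<bullet> (x - p) \<le> e * norm (x - p)) \<and>
        (x \<notin> closure \<Omega> \<longrightarrow> n0 \<bullet> (x - p) \<ge> - e * norm (x - p))"
    proof (intro exI[of _ "min r dh"] conjI ballI)
      show "min r dh > 0" using r dh by simp
      fix x assume x: "x \<in> ball p (min r dh)"
      have xr: "x \<in> ball p r" using x by (simp add: dist_norm)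
      have nx: "norm (x - p) < dh" using x by (simp add: dist_norm norm_minus_commute)
      have hu: "\<bar>h (uu x) - g 0 \<bullet> uu x\<bar> \<le> (e * norm mm) * norm (x - p)"
        using dh(2)[of "uu x"] norm_uu[of x] nx e nm
        by (smt (verit, best) mult_left_mono mult_nonneg_nonneg norm_ge_zero)
      show "x \<in> \<Omega> \<longrightarrow> n0 \<bullet> (x - p) \<le> e * norm (x - p)"
      proof
        assume "x \<in> \<Omega>"
        hence "ww x $ 3 < h (uu x)" using loc' xr by blast
        hence "ww x $ 3 - g 0 \<bullet> uu x \<le> (e * norm mm) * norm (x - p)" using hu by linarith
        then show "n0 \<bullet> (x - p) \<le> e * norm (x - p)" unfolding in0 using nm
          by (simp add: divide_le_eq mult.commute mult.left_commute)
      qed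
      show "x \<notin> closure \<Omega> \<longrightarrow> n0 \<bullet> (x - p) \<ge> - e * norm (x - p)"
      proof
        assume "x \<notin> closure \<Omega>"
        hence "x \<notin> \<Omega>" using closure_subset by blast
        hence "\<not> ww x $ 3 < h (uu x)" using loc' xr by blast
        hence "ww x $ 3 - g 0 \<bullet> uu x \<ge> - (e * norm mm * norm (x - p))" using hu by linarith
        hence "(ww x $ 3 - g 0 \<bullet> uu x) / norm mm \<ge> - (e * norm mm * norm (x - p)) / norm mm"
          using nm by (intro divide_right_mono) auto
        then show "n0 \<bullet> (x - p) \<ge> - e * norm (x - p)" unfolding in0 using nm
          by simp
      qed
    qed
  qed
  then show ?thesis by blast
qed

lemma Pn_dir:
  assumes P: "Pn n" and md: "mm \<bullet> d > 0"
  shows "Q n \<bullet> d \<ge> 0"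
proof -
  have key: "Q n \<bullet> d \<ge> - e * norm d" if e: "e > 0" for e
  proof -
    obtain \<delta> where \<delta>: "\<delta> > 0" "\<And>x. x \<in> ball p \<delta> \<Longrightarrow> x \<notin> closure \<Omega> \<Longrightarrow> n \<bullet> (x - p) \<ge> - e * norm (x - p)"
      using P e unfolding Pn_def by blast
    define \<epsilon> where "\<epsilon> = (mm \<bullet> d) / (2 * (norm d + 1))"
    have \<epsilon>: "\<epsilon> > 0" unfolding \<epsilon>_def by (intro divide_pos_pos md) (smt (verit) norm_ge_zero)
    obtain dh where dh: "dh > 0" "\<And>y. norm y < dh \<Longrightarrow> \<bar>h y - g 0 \<bullet> y\<bar> \<le> \<epsilon> * norm y"
      using deriv0[OF \<epsilon>] by auto
    obtain zd where zd: "Q zd = d" using orthogonal_transformation_surj[OF Q] by (metis surjD)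
    define t where "t = min \<delta> (min dh r) / (2 * (norm d + 1))"
    have t: "t > 0" unfolding t_def using \<delta>(1) dh(1) r by (intro divide_pos_pos) (simp, smt (verit) norm_ge_zero)
    have tnd: "t * norm d < min \<delta> (min dh r)"
    proof -
      have "t * norm d \<le> t * (norm d + 1)" using t by simp
      also have "\<dots> = min \<delta> (min dh r) / 2"
      proof -
        have "norm d + 1 > 0" by (smt (verit) norm_ge_zero)
        then show ?thesis unfolding t_def by (simp add: field_simps)
      qed
      also have "\<dots> < min \<delta> (min dh r)"
      proof -
        have "0 < min \<delta> (min dh r)" using \<delta>(1) dh(1) r by simp
        then show ?thesis by linarith
      qed
      finally show ?thesis .
    qed
    define x where "x = p + t *\<^sub>R zd"
    have wwx: "ww x = t *\<^sub>R d" unfolding x_def ww_def using linQ zd by (simp add: linear_scale)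
    have nxp: "norm (x - p) = t * norm d" using normQ[of "x - p"] wwx t by (simp add: ww_def)
    have xb: "x \<in> ball p \<delta>" "x \<in> ball p r" using nxp tnd by (auto simp: dist_norm norm_minus_commute)
    have uux: "uu x = t *\<^sub>R vector [d $ 1, d $ 2]" unfolding uu_def wwx
      using vector2_scale[of t "d$1" "d$2"] by simp
    have nu: "norm (vector [d $ 1, d $ 2] :: real^2) \<le> norm d" by (rule norm_vector2_le)
    have nuu: "norm (uu x) < dh" using uux t nu tnd
      by (smt (verit, best) mult_left_mono norm_scaleR abs_of_pos)
    have "h (uu x) \<le> g 0 \<bullet> uu x + \<epsilon> * norm (uu x)" using dh(2)[OF nuu] by linarith
    also have "\<dots> = t * (g 0 \<bullet> vector [d $ 1, d $ 2]) + t * (\<epsilon> * norm (vector [d $ 1, d $ 2] :: real^2))"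
      using t by (simp add: uux)
    also have "\<dots> < t * (d $ 3)"
    proof -
      have "\<epsilon> * norm (vector [d $ 1, d $ 2] :: real^2) \<le> \<epsilon> * (norm d + 1)"
        using nu \<epsilon> by (intro mult_left_mono) auto
      also have "\<dots> = (mm \<bullet> d) / 2"
      proof -
        have "norm d + 1 > 0" by (smt (verit) norm_ge_zero)
        then show ?thesis unfolding \<epsilon>_def by (simp add: field_simps)
      qed
      finally have "\<epsilon> * norm (vector [d $ 1, d $ 2] :: real^2) \<le> (mm \<bullet> d) / 2" .
      moreover have "mm \<bullet> d = d $ 3 - g 0 \<bullet> vector [d $ 1, d $ 2]" unfolding mm_def by (rule inner_m)
      ultimately have "g 0 \<bullet> vector [d $ 1, d $ 2] + \<epsilon> * norm (vector [d $ 1, d $ 2] :: real^2) < d $ 3"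
        using md by linarith
      then show ?thesis using t by (simp flip: distrib_left)
    qed
    also have "\<dots> = ww x $ 3" by (simp add: wwx)
    finally have "x \<notin> closure \<Omega>" using above_not_closure xb by blast
    hence "n \<bullet> (x - p) \<ge> - e * norm (x - p)" using \<delta>(2) xb by blast
    moreover have "n \<bullet> (x - p) = t * (Q n \<bullet> d)" using innerQ[of n "x - p"] wwx by (simp add: ww_def)
    ultimately have "t * (Q n \<bullet> d) \<ge> t * (- e * norm d)" using nxp by (simp add: mult_ac)
    then show ?thesis using t by (metis mult_le_cancel_left_pos mult_minus_left)
  qed
  show ?thesis
  proof (rule ccontr)
    assume "\<not> ?thesis"
    hence neg: "Q n \<bullet> d < 0" by simp
    define e where "e = - (Q n \<bullet> d) / (2 * (norm d + 1))"
    have e: "e > 0" unfolding e_def using neg by (intro divide_pos_pos) (simp, smt (verit) norm_ge_zero)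
    have "e * norm d \<le> e * (norm d + 1)" using e by simp
    also have "\<dots> = - (Q n \<bullet> d) / 2"
    proof -
      have "norm d + 1 > 0" by (smt (verit) norm_ge_zero)
      then show ?thesis unfolding e_def by (simp add: field_simps)
    qed
    finally show False using key[OF e] neg by linarith
  qed
qed

lemma Pn_unique:
  assumes P: "Pn n" shows "Q n = (1 / norm mm) *\<^sub>R mm"
proof -
  define v where "v = Q n"
  have nv: "norm v = 1" using P normQ by (simp add: Pn_def v_def)
  have mm2: "mm \<bullet> mm > 0" using mm_nz by simp
  define c where "c = (v \<bullet> mm) / (mm \<bullet> mm)"
  define a where "a = v - c *\<^sub>R mm"
  have am: "a \<bullet> mm = 0" unfolding a_def c_def using mm2 by (simp add: inner_diff_left)
  have va: "v \<bullet> a = a \<bullet> a" unfolding a_def using am[unfolded a_def]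
    by (simp add: inner_diff_right inner_diff_left inner_commute algebra_simps)
  have s_ineq: "s * (v \<bullet> mm) \<ge> a \<bullet> a" if s: "s > 0" for s
  proof -
    have "mm \<bullet> (s *\<^sub>R mm - a) > 0" using am mm2 s by (simp add: inner_diff_right inner_commute)
    hence "v \<bullet> (s *\<^sub>R mm - a) \<ge> 0" using Pn_dir[OF P] by (simp add: v_def)
    then show ?thesis using va by (simp add: inner_diff_right)
  qed
  have a0: "a \<bullet> a = 0"
  proof (rule ccontr)
    assume "a \<bullet> a \<noteq> 0"
    hence pos: "a \<bullet> a > 0" by (simp add: order_le_neq_trans)
    define s where "s = (a \<bullet> a) / (2 * (\<bar>v \<bullet> mm\<bar> + 1))"
    have s: "s > 0" using pos by (simp add: s_def)
    have "s * (v \<bullet> mm) \<le> s * (\<bar>v \<bullet> mm\<bar> + 1)" using s by (intro mult_left_mono) auto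
    also have "\<dots> = (a \<bullet> a) / 2" unfolding s_def using abs_ge_zero[of "v \<bullet> mm"] by (simp add: field_simps)
    finally show False using s_ineq[OF s] pos by linarith
  qed
  hence "a = 0" by simp
  hence vc: "v = c *\<^sub>R mm" unfolding a_def by simp
  have "v \<bullet> mm \<ge> 0" using Pn_dir[OF P mm2] by (simp add: v_def)
  hence c: "c \<ge> 0" unfolding c_def using mm2 by simp
  have "c * norm mm = 1" using nv vc c by simp
  hence "c = 1 / norm mm" using mm_nz by (simp add: field_simps)
  then show ?thesis using vc by (simp add: v_def)
qed

lemma normal_norm: "norm (outer_normal \<Omega> p) = 1"
proof -
  obtain n0 where n0: "Pn n0" using Pn_exists by blast
  have uniq: "n = n0" if "Pn n" for n
  proof -
    have "Q n = Q n0" using Pn_unique[OF that] Pn_unique[OF n0] by simp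
    hence "norm (Q (n - n0)) = 0" using linQ by (simp add: linear_diff)
    then show ?thesis using normQ by simp
  qed
  have "outer_normal \<Omega> p = n0"
    unfolding outer_normal_def using n0 uniq unfolding Pn_def
    by (intro the_equality) blast+
  then show ?thesis using n0 by (simp add: Pn_def)
qed

lemma ww_diff: "ww x - ww y = Q (x - y)"
  unfolding ww_def using linQ by (simp add: linear_diff)

lemma uu_diff: "uu x - uu y = vector [(ww x - ww y) $ 1, (ww x - ww y) $ 2]"
  unfolding uu_def by (simp add: vector2_diff)

lemma norm_vec2_l1: "norm (vector [a, b] :: real^2) \<le> \<bar>a\<bar> + \<bar>b\<bar>"
  using norm_le_l1_cart[of "vector [a, b] :: real^2"] by (simp add: sum_2)

lemma norm_vec3_l1: "norm (w :: real^3) \<le> \<bar>w$1\<bar> + \<bar>w$2\<bar> + \<bar>w$3\<bar>"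
  using norm_le_l1_cart[of w] by (simp add: sum_3)

lemma patch_cover:
  assumes gc: "continuous_on UNIV g"
  shows "\<exists>B. \<forall>\<delta>>0. fincover \<delta> (frontier \<Omega> \<inter> ball p r) B"
proof -
  define K where "K = cball (0::real^2) (2*r)"
  have "compact (g ` K)" unfolding K_def
    by (intro compact_continuous_image continuous_on_subset[OF gc]) auto
  then obtain L where L: "L > 0" "\<And>z. z \<in> K \<Longrightarrow> norm (g z) \<le> L"
    using compact_imp_bounded bounded_pos by (metis imageI)
  have lip: "\<bar>h u - h v\<bar> \<le> L * norm (u - v)" if "u \<in> K" "v \<in> K" for u v
  proof -
    have "norm (h u - h v) \<le> L * norm (u - v)"
    proof (rule differentiable_bound[of K h "\<lambda>z v. g z \<bullet> v" L])
      show "convex K" unfolding K_def by simp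
      show "(h has_derivative (\<lambda>v. g z \<bullet> v)) (at z within K)" for z
        using hd by (auto intro: has_derivative_at_withinI)
      show "onorm (\<lambda>v. g z \<bullet> v) \<le> L" if "z \<in> K" for z
      proof -
        have "onorm (\<lambda>v. g z \<bullet> v) \<le> norm (g z) * onorm (\<lambda>x::real^2. x)"
          by (rule onorm_inner_right) (rule bounded_linear_ident)
        then show ?thesis using L(2)[OF that] by (simp add: onorm_id)
      qed
    qed (use that in auto)
    then show ?thesis by simp
  qed
  define c where "c = 2 * (1 + L)"
  have c: "c > 0" using L by (simp add: c_def)
  have "\<forall>\<delta>>0. fincover \<delta> (frontier \<Omega> \<inter> ball p r) (pi * c\<^sup>2 * r\<^sup>2)"
  proof (intro allI impI)
    fix \<delta> :: real assume \<delta>: "\<delta> > 0"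
    define N :: nat where "N = nat \<lceil>2 * r * c / \<delta>\<rceil> + 1"
    have N1: "N \<ge> 1" by (simp add: N_def)
    have Ngt: "real N > 2 * r * c / \<delta>" unfolding N_def
      by (smt (verit, best) of_nat_1 of_nat_add real_nat_ceiling_ge)
    define s where "s = 2 * r / real N"
    have s: "s > 0" using r N1 by (simp add: s_def)
    have cs: "c * s \<le> \<delta>"
    proof -
      have "2 * r * c < \<delta> * real N" using Ngt \<delta> by (simp add: divide_less_eq mult.commute)
      then show ?thesis unfolding s_def using N1 by (simp add: divide_le_eq mult.commute mult.left_commute)
    qed
    define cell where "cell i = {x \<in> frontier \<Omega> \<inter> ball p r.
        - r + real (i div N) * s \<le> ww x $ 1 \<and> ww x $ 1 \<le> - r + real (i div N + 1) * s \<and>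
        - r + real (i mod N) * s \<le> ww x $ 2 \<and> ww x $ 2 \<le> - r + real (i mod N + 1) * s}" for i
    have inK: "uu x \<in> K" if "x \<in> ball p r" for x
      using norm_uu[of x] that r by (simp add: K_def dist_norm norm_minus_commute)
    have diam: "diameter (cell i) \<le> c * s" for i
    proof (rule diameter_le)
      show "cell i \<noteq> {} \<or> 0 \<le> c * s" using c s by simp
      fix x y assume x: "x \<in> cell i" and y: "y \<in> cell i"
      have xF: "x \<in> frontier \<Omega>" "x \<in> ball p r" and yF: "y \<in> frontier \<Omega>" "y \<in> ball p r"
        using x y by (auto simp: cell_def)
      have d1: "\<bar>(ww x - ww y) $ 1\<bar> \<le> s"
      proof -
        have "- r + real (i div N) * s \<le> ww x $ 1" "ww x $ 1 \<le> - r + real (i div N) * s + s"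
          "- r + real (i div N) * s \<le> ww y $ 1" "ww y $ 1 \<le> - r + real (i div N) * s + s"
          using x y by (auto simp: cell_def algebra_simps)
        then show ?thesis by (simp only: vector_minus_component abs_le_iff) linarith
      qed
      have d2: "\<bar>(ww x - ww y) $ 2\<bar> \<le> s"
      proof -
        have "- r + real (i mod N) * s \<le> ww x $ 2" "ww x $ 2 \<le> - r + real (i mod N) * s + s"
          "- r + real (i mod N) * s \<le> ww y $ 2" "ww y $ 2 \<le> - r + real (i mod N) * s + s"
          using x y by (auto simp: cell_def algebra_simps)
        then show ?thesis by (simp only: vector_minus_component abs_le_iff) linarith
      qed
      have "\<bar>(ww x - ww y) $ 3\<bar> = \<bar>h (uu x) - h (uu y)\<bar>"
        using frontier_graph[OF xF] frontier_graph[OF yF] by simp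
      also have "\<dots> \<le> L * norm (uu x - uu y)" using lip inK xF yF by blast
      also have "\<dots> \<le> L * (2 * s)"
      proof -
        have "norm (uu x - uu y) \<le> 2 * s" unfolding uu_diff
          using norm_vec2_l1[of "(ww x - ww y) $ 1" "(ww x - ww y) $ 2"] d1 d2 by linarith
        then show ?thesis using L by (intro mult_left_mono) auto
      qed
      finally have d3: "\<bar>(ww x - ww y) $ 3\<bar> \<le> L * (2 * s)" .
      have "norm (x - y) = norm (ww x - ww y)" by (simp add: ww_diff normQ)
      also have "\<dots> \<le> s + s + L * (2 * s)" using norm_vec3_l1[of "ww x - ww y"] d1 d2 d3 by linarith
      also have "\<dots> = c * s" by (simp add: c_def algebra_simps)
      finally show "norm (x - y) \<le> c * s" .
    qed
    have cov: "frontier \<Omega> \<inter> ball p r \<subseteq> (\<Union>i\<in>{..<N*N}. cell i)"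
    proof
      fix x assume xF: "x \<in> frontier \<Omega> \<inter> ball p r"
      have nx: "norm (ww x) < r" using xF by (simp add: norm_ww dist_norm norm_minus_commute)
      have w1: "\<bar>ww x $ 1\<bar> < r" using component_le_norm_cart[of "ww x" 1] nx by linarith
      have w2: "\<bar>ww x $ 2\<bar> < r" using component_le_norm_cart[of "ww x" 2] nx by linarith
      have fl: "\<exists>a::nat. a < N \<and> - r + real a * s \<le> t \<and> t \<le> - r + real (a + 1) * s" if t: "\<bar>t\<bar> < r" for t
      proof -
        define y where "y = (t + r) / s"
        have y0: "y \<ge> 0" using t s by (simp add: y_def)
        have yN: "y < real N" using t s r N1 by (simp add: y_def s_def field_simps)
        define a where "a = nat \<lfloor>y\<rfloor>"
        have ra: "real a = of_int \<lfloor>y\<rfloor>" using y0 by (simp add: a_def)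
        have a1: "real a \<le> y" "y < real a + 1" using ra by linarith+
        have "a < N" using a1 yN by linarith
        moreover have "- r + real a * s \<le> t" using a1(1) s by (simp add: y_def field_simps)
        moreover have "t \<le> - r + real (a + 1) * s" using a1(2) s by (simp add: y_def field_simps)
        ultimately show ?thesis by blast
      qed
      obtain a where a: "a < N" "- r + real a * s \<le> ww x $ 1" "ww x $ 1 \<le> - r + real (a + 1) * s"
        using fl[OF w1] by blast
      obtain b where b: "b < N" "- r + real b * s \<le> ww x $ 2" "ww x $ 2 \<le> - r + real (b + 1) * s"
        using fl[OF w2] by blast
      define i where "i = a * N + b"
      have idiv: "i div N = a" and imod: "i mod N = b" using b(1) by (simp_all add: i_def)
      have "i < N * N"
      proof -
        have "i < (a + 1) * N" unfolding i_def using b(1) by simp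
        also have "\<dots> \<le> N * N" using a(1) by (intro mult_right_mono) auto
        finally show ?thesis .
      qed
      moreover have "x \<in> cell i" unfolding cell_def idiv imod using xF a b by simp
      ultimately show "x \<in> (\<Union>i\<in>{..<N*N}. cell i)" by blast
    qed
    have bnd: "bounded (cell i)" for i by (rule bounded_subset[of "ball p r"]) (auto simp: cell_def)
    have "(\<Sum>i\<in>{..<N*N}. pi / 4 * diameter (cell i) ^ 2) \<le> real (card {..<N*N}) * (pi / 4 * (c * s) ^ 2)"
    proof (rule sum_bounded_above)
      fix i
      have "diameter (cell i) ^ 2 \<le> (c * s) ^ 2"
        using diam[of i] diameter_ge_0[OF bnd[of i]] by (intro power_mono) auto
      then show "pi / 4 * diameter (cell i) ^ 2 \<le> pi / 4 * (c * s) ^ 2" by simp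
    qed
    also have "\<dots> = pi * c\<^sup>2 * r\<^sup>2" using N1 unfolding s_def
      by (simp add: power2_eq_square field_simps)
    finally have sm: "(\<Sum>i\<in>{..<N*N}. pi / 4 * diameter (cell i) ^ 2) \<le> pi * c\<^sup>2 * r\<^sup>2" .
    show "fincover \<delta> (frontier \<Omega> \<inter> ball p r) (pi * c\<^sup>2 * r\<^sup>2)"
      unfolding fincover_def
      using cov bnd diam cs sm by (intro exI[of _ "{..<N*N}"] exI[of _ cell]) (auto intro: order_trans)
  qed
  then show ?thesis by blast
qed

end

lemma ennreal_term_le_suminf: fixes f :: "nat \<Rightarrow> ennreal" shows "f n \<le> suminf f"
  by (rule ccontr) (auto dest: ennreal_suminf_lessD simp: not_le)

lemma inv_sq_pointwise:
  fixes x y :: "real^3" assumes R: "R > 0"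
  shows "indicator (ball x R) y * ennreal (1 / (dist x y)\<^sup>2)
     \<le> (\<Sum>n. ennreal (4 ^ (n+1) / R\<^sup>2) * indicator (ball x (R / 2 ^ n)) y)"
proof (cases "y \<in> ball x R \<and> y \<noteq> x")
  case False
  then show ?thesis by auto
next
  case True
  define d where "d = dist x y"
  have d: "0 < d" "d < R" using True by (auto simp: d_def)
  obtain m where m: "R / d < 2 ^ m" using real_arch_pow[of 2 "R/d"] by auto
  have ex: "\<exists>m. R / 2 ^ m \<le> d" using m d
    by (intro exI[of _ m]) (auto simp: field_simps)
  define M where "M = (LEAST m. R / 2 ^ m \<le> d)"
  have M1: "R / 2 ^ M \<le> d" unfolding M_def by (rule LeastI_ex[OF ex])
  have "M \<noteq> 0" using M1 d by (cases "M = 0") auto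
  then obtain n where n: "M = Suc n" by (cases M) auto
  have "\<not> R / 2 ^ n \<le> d" using n unfolding M_def
    by (metis lessI not_less_Least)
  hence dn: "d < R / 2 ^ n" by simp
  have dM: "R / 2 ^ (n+1) \<le> d" using M1 n by simp
  have "1 / d\<^sup>2 \<le> 1 / (R / 2 ^ (n+1))\<^sup>2"
    using dM d R by (intro divide_left_mono power_mono) auto
  also have "\<dots> = 4 ^ (n+1) / R\<^sup>2"
  proof -
    have "((2::real) ^ (n+1))\<^sup>2 = 4 ^ (n+1)"
      unfolding power2_eq_square power_mult_distrib[symmetric] by simp
    then show ?thesis by (simp add: power_divide)
  qed
  finally have le: "1 / d\<^sup>2 \<le> 4 ^ (n+1) / R\<^sup>2" .
  have "indicator (ball x R) y * ennreal (1 / (dist x y)\<^sup>2) = ennreal (1 / d\<^sup>2)"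
    using True by (simp add: d_def)
  also have "\<dots> \<le> ennreal (4 ^ (n+1) / R\<^sup>2) * indicator (ball x (R / 2 ^ n)) y"
    using le dn by (simp add: d_def ennreal_leI)
  also have "\<dots> \<le> (\<Sum>n. ennreal (4 ^ (n+1) / R\<^sup>2) * indicator (ball x (R / 2 ^ n)) y)"
    by (rule ennreal_term_le_suminf[where f="\<lambda>n. ennreal (4 ^ (n+1) / R\<^sup>2) * indicator (ball x (R / 2 ^ n)) y"])
  finally show ?thesis .
qed

lemma inv_sq_integral:
  fixes x :: "real^3" assumes R: "R > 0"
  shows "(\<integral>\<^sup>+y. indicator (ball x R) y * ennreal (1 / (dist x y)\<^sup>2) \<partial>lborel)
     \<le> ennreal (8 * unit_ball_vol 3 * R)"
proof -
  have "(\<integral>\<^sup>+y. indicator (ball x R) y * ennreal (1 / (dist x y)\<^sup>2) \<partial>lborel)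
     \<le> (\<integral>\<^sup>+y. (\<Sum>n. ennreal (4 ^ (n+1) / R\<^sup>2) * indicator (ball x (R / 2 ^ n)) y) \<partial>lborel)"
    by (intro nn_integral_mono inv_sq_pointwise R)
  also have "\<dots> = (\<Sum>n. \<integral>\<^sup>+y. ennreal (4 ^ (n+1) / R\<^sup>2) * indicator (ball x (R / 2 ^ n)) y \<partial>lborel)"
    by (intro nn_integral_suminf borel_measurable_times_ennreal borel_measurable_const borel_measurable_indicator) auto
  also have "\<dots> = (\<Sum>n. ennreal (4 ^ (n+1) / R\<^sup>2 * (unit_ball_vol 3 * (R / 2 ^ n) ^ 3)))"
    using R by (subst nn_integral_cmult_indicator) (auto simp: emeasure_ball ennreal_mult[symmetric] simp del: power_Suc)
  also have "\<dots> = (\<Sum>n. ennreal (4 * unit_ball_vol 3 * R * (1/2) ^ n))"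
  proof (intro suminf_cong arg_cong[where f=ennreal])
    fix n :: nat
    have "(4::real) ^ (n+1) = 4 * 2 ^ n * 2 ^ n"
      by (simp add: power_mult_distrib[symmetric])
    then show "4 ^ (n+1) / R\<^sup>2 * (unit_ball_vol 3 * (R / 2 ^ n) ^ 3) = 4 * unit_ball_vol 3 * R * (1/2) ^ n"
      using R by (simp add: power_divide field_simps power2_eq_square power3_eq_cube)
  qed
  also have "\<dots> = ennreal (8 * unit_ball_vol 3 * R)"
  proof (rule suminf_ennreal_eq)
    have e: "4 * unit_ball_vol 3 * R * (1 / (1 - 1/2)) = 8 * unit_ball_vol 3 * R" by simp
    show "(\<lambda>n. 4 * unit_ball_vol 3 * R * (1 / 2) ^ n) sums (8 * unit_ball_vol 3 * R)"
      using sums_mult[OF geometric_sums[of "1/2::real"], of "4 * unit_ball_vol 3 * R"] unfolding e by simp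
  qed (use R in auto)
  finally show ?thesis .
qed

lemma set_integral_bound_finite:
  fixes f :: "'a \<Rightarrow> complex"
  assumes A: "A \<in> sets M" "emeasure M A < \<infinity>" and B: "0 \<le> B"
    and bound: "AE x in M. x \<in> A \<longrightarrow> norm (f x) \<le> B"
  shows "norm (set_lebesgue_integral M A f) \<le> B * measure M A"
proof (cases "set_integrable M A f")
  case True
  have "norm (set_lebesgue_integral M A f) \<le> (LINT x|M. norm (indicator A x *\<^sub>R f x))"
    unfolding set_lebesgue_integral_def by (rule integral_norm_bound)
  also have "\<dots> \<le> (LINT x|M. B * indicator A x)"
  proof (rule integral_mono_AE)
    show "integrable M (\<lambda>x. norm (indicator A x *\<^sub>R f x))"
      using True unfolding set_integrable_def by (rule integrable_norm)
    show "integrable M (\<lambda>x. B * indicator A x)"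
      using A by (intro integrable_mult_right integrable_real_indicator)
    show "AE x in M. norm (indicator A x *\<^sub>R f x) \<le> B * indicator A x"
      using bound by eventually_elim (auto simp: indicator_def)
  qed
  also have "\<dots> = B * measure M A" using A by simp
  finally show ?thesis .
next
  case False
  then have "set_lebesgue_integral M A f = 0"
    unfolding set_lebesgue_integral_def set_integrable_def by (rule not_integrable_integral_eq)
  then show ?thesis using B by simp
qed

lemma frontier_normal:
  assumes op: "open \<Omega>" and C2: "C2_boundary \<Omega>" and p: "p \<in> frontier \<Omega>"
  shows "norm (outer_normal \<Omega> p) = 1"
proof -
  have ex: "\<exists>r>0. \<exists>(Q::real^3 \<Rightarrow> real^3) (h::real^2 \<Rightarrow> real)
        (g::real^2 \<Rightarrow> real^2) (H::real^2 \<Rightarrow> real^2^2).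
        orthogonal_transformation Q \<and>
        (\<forall>z. (h has_derivative (\<lambda>v. g z \<bullet> v)) (at z)) \<and>
        (\<forall>z. (g has_derivative (\<lambda>v. H z *v v)) (at z)) \<and>
        continuous_on UNIV H \<and>
        (\<forall>x\<in>ball p r. x \<in> \<Omega> \<longleftrightarrow>
            (Q (x - p)) $ 3 < h (vector [(Q (x - p)) $ 1, (Q (x - p)) $ 2]))"
    using C2 p unfolding C2_boundary_def by (rule bspec)
  then obtain r and Q :: "real^3 \<Rightarrow> real^3" and h :: "real^2 \<Rightarrow> real" and g :: "real^2 \<Rightarrow> real^2"
    where r: "r > 0" and Q: "orthogonal_transformation Q"
    and hd: "\<forall>z. (h has_derivative (\<lambda>v. g z \<bullet> v)) (at z)"
    and loc: "\<forall>x\<in>ball p r. x \<in> \<Omega> \<longleftrightarrow>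
            (Q (x - p)) $ 3 < h (vector [(Q (x - p)) $ 1, (Q (x - p)) $ 2])"
    by (elim exE conjE) blast
  show ?thesis by (rule normal_norm[OF op p r Q hd loc])
qed

lemma frontier_patch:
  assumes op: "open \<Omega>" and C2: "C2_boundary \<Omega>" and p: "p \<in> frontier \<Omega>"
  shows "\<exists>r>0. \<exists>B. \<forall>\<delta>>0. fincover \<delta> (frontier \<Omega> \<inter> ball p r) B"
proof -
  have ex: "\<exists>r>0. \<exists>(Q::real^3 \<Rightarrow> real^3) (h::real^2 \<Rightarrow> real)
        (g::real^2 \<Rightarrow> real^2) (H::real^2 \<Rightarrow> real^2^2).
        orthogonal_transformation Q \<and>
        (\<forall>z. (h has_derivative (\<lambda>v. g z \<bullet> v)) (at z)) \<and>
        (\<forall>z. (g has_derivative (\<lambda>v. H z *v v)) (at z)) \<and>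
        continuous_on UNIV H \<and>
        (\<forall>x\<in>ball p r. x \<in> \<Omega> \<longleftrightarrow>
            (Q (x - p)) $ 3 < h (vector [(Q (x - p)) $ 1, (Q (x - p)) $ 2]))"
    using C2 p unfolding C2_boundary_def by (rule bspec)
  then obtain r and Q :: "real^3 \<Rightarrow> real^3" and h :: "real^2 \<Rightarrow> real" and g :: "real^2 \<Rightarrow> real^2"
    and H :: "real^2 \<Rightarrow> real^2^2"
    where r: "r > 0" and Q: "orthogonal_transformation Q"
    and hd: "\<forall>z. (h has_derivative (\<lambda>v. g z \<bullet> v)) (at z)"
    and gd: "\<forall>z. (g has_derivative (\<lambda>v. H z *v v)) (at z)"
    and loc: "\<forall>x\<in>ball p r. x \<in> \<Omega> \<longleftrightarrow>
            (Q (x - p)) $ 3 < h (vector [(Q (x - p)) $ 1, (Q (x - p)) $ 2])"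
    by (elim exE conjE) blast
  have gc: "continuous_on UNIV g"
    using gd by (meson continuous_at_imp_continuous_on has_derivative_continuous)
  obtain B where "\<forall>\<delta>>0. fincover \<delta> (frontier \<Omega> \<inter> ball p r) B"
    using patch_cover[OF op p r Q hd loc gc] by blast
  then show ?thesis using r by blast
qed

lemma frontier_finite:
  assumes op: "open \<Omega>" and bd: "bounded \<Omega>" and C2: "C2_boundary \<Omega>"
  shows "emeasure surface_measure (frontier \<Omega>) < \<infinity>"
proof -
  have "\<forall>p\<in>frontier \<Omega>. \<exists>r. r > 0 \<and> (\<exists>B. \<forall>\<delta>>0. fincover \<delta> (frontier \<Omega> \<inter> ball p r) B)"
    using frontier_patch[OF op C2] by blast
  then obtain R where R: "\<forall>p\<in>frontier \<Omega>. R p > 0 \<and> (\<exists>B. \<forall>\<delta>>0. fincover \<delta> (frontier \<Omega> \<inter> ball p (R p)) B)"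
    by (rule bchoice[elim_format]) blast
  hence "\<forall>p\<in>frontier \<Omega>. \<exists>B. \<forall>\<delta>>0. fincover \<delta> (frontier \<Omega> \<inter> ball p (R p)) B" by blast
  then obtain Bf where Bf: "\<forall>p\<in>frontier \<Omega>. \<forall>\<delta>>0. fincover \<delta> (frontier \<Omega> \<inter> ball p (R p)) (Bf p)"
    by (rule bchoice[elim_format]) blast
  have cpt: "compact (frontier \<Omega>)" using bd by (rule compact_frontier_bounded)
  have "frontier \<Omega> \<subseteq> (\<Union>p\<in>frontier \<Omega>. ball p (R p))"
  proof
    fix x assume "x \<in> frontier \<Omega>"
    then have "x \<in> ball x (R x)" using R by simp
    then show "x \<in> (\<Union>p\<in>frontier \<Omega>. ball p (R p))" using \<open>x \<in> frontier \<Omega>\<close> by blast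
  qed
  then obtain T where T: "T \<subseteq> frontier \<Omega>" "finite T" "frontier \<Omega> \<subseteq> (\<Union>p\<in>T. ball p (R p))"
    using compactE_image[OF cpt, of "frontier \<Omega>" "\<lambda>p. ball p (R p)"] by blast
  have eq: "frontier \<Omega> = (\<Union>p\<in>T. frontier \<Omega> \<inter> ball p (R p))" using T(3) by blast
  have "fincover \<delta> (frontier \<Omega>) (\<Sum>p\<in>T. Bf p)" if d: "\<delta> > 0" for \<delta>
  proof -
    have "fincover \<delta> (\<Union>p\<in>T. frontier \<Omega> \<inter> ball p (R p)) (\<Sum>p\<in>T. Bf p)"
    proof (rule fincover_UN[OF T(2)])
      fix p assume "p \<in> T"
      then show "fincover \<delta> (frontier \<Omega> \<inter> ball p (R p)) (Bf p)" using Bf T(1) d by blast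
    qed
    then show ?thesis using eq by simp
  qed
  hence "hausdorff2_outer (frontier \<Omega>) \<le> ennreal (\<Sum>p\<in>T. Bf p)" by (rule fincover_outer)
  hence "emeasure surface_measure (frontier \<Omega>) \<le> ennreal (\<Sum>p\<in>T. Bf p)"
    by (rule order_trans[OF surface_le_outer])
  then show ?thesis by (simp add: le_less_trans)
qed

lemma inner_bound:
  fixes x :: "real^3" and K Gi :: "real^3 \<Rightarrow> complex" and P :: "real^3 \<Rightarrow> real"
  assumes xO: "x \<notin> \<Omega>" and R: "R > 0" and sub: "\<Omega> \<subseteq> ball x R"
    and E: "0 \<le> E" and Kb: "\<And>y. y \<in> \<Omega> \<Longrightarrow> norm (K y) \<le> E / dist x y"
    and Cg: "0 \<le> Cg" and Gb: "\<And>y. y \<in> \<Omega> \<Longrightarrow> norm (Gi y) \<le> Cg * sqrt (P y)"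
    and P0: "\<And>y. y \<in> \<Omega> \<Longrightarrow> 0 \<le> P y" and Pi: "set_integrable lebesgue \<Omega> P"
  shows "(norm (LINT y:\<Omega>|lebesgue. K y * Gi y))\<^sup>2
     \<le> E\<^sup>2 * Cg\<^sup>2 * (8 * unit_ball_vol 3 * R) * (LINT y:\<Omega>|lebesgue. P y)"
proof -
  define NP where "NP = (LINT y:\<Omega>|lebesgue. P y)"
  have NP0: "NP \<ge> 0" unfolding NP_def set_lebesgue_integral_def
    using P0 by (intro integral_nonneg_AE) (auto simp: indicator_def)
  show ?thesis
  proof (cases "set_integrable lebesgue \<Omega> (\<lambda>y. K y * Gi y)")
    case False
    then have "(LINT y:\<Omega>|lebesgue. K y * Gi y) = 0"
      unfolding set_lebesgue_integral_def set_integrable_def by (rule not_integrable_integral_eq)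
    then show ?thesis using NP0 E Cg R by (simp add: NP_def)
  next
    case True
    define f where "f y = ennreal (indicator (ball x R) y * (E / dist x y))" for y
    define g where "g y = ennreal (Cg * sqrt (indicator \<Omega> y *\<^sub>R P y))" for y
    have [measurable]: "ball x R \<in> sets borel" by simp
    have fmb: "f \<in> borel_measurable lborel" unfolding f_def by measurable
    have fm: "f \<in> borel_measurable lebesgue" using fmb by (rule measurable_completion)
    have Pm[measurable]: "(\<lambda>y. indicator \<Omega> y *\<^sub>R P y) \<in> borel_measurable lebesgue"
      using Pi unfolding set_integrable_def by (rule borel_measurable_integrable)
    have gm: "g \<in> borel_measurable lebesgue" unfolding g_def by measurable
    have "ennreal (norm (LINT y:\<Omega>|lebesgue. K y * Gi y))
        \<le> (\<integral>\<^sup>+y. ennreal (norm (indicator \<Omega> y *\<^sub>R (K y * Gi y))) \<partial>lebesgue)"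
      unfolding set_lebesgue_integral_def using True unfolding set_integrable_def
      by (rule integral_norm_bound_ennreal)
    also have "\<dots> \<le> (\<integral>\<^sup>+y. f y * g y \<partial>lebesgue)"
    proof (rule nn_integral_mono)
      fix y
      show "ennreal (norm (indicator \<Omega> y *\<^sub>R (K y * Gi y))) \<le> f y * g y"
      proof (cases "y \<in> \<Omega>")
        case False then show ?thesis by simp
      next
        case yO: True
        have yb: "y \<in> ball x R" using sub yO by blast
        have "norm (indicator \<Omega> y *\<^sub>R (K y * Gi y)) = norm (K y) * norm (Gi y)"
          using yO by (simp add: norm_mult)
        also have "\<dots> \<le> (E / dist x y) * (Cg * sqrt (P y))"
          using Kb[OF yO] Gb[OF yO] E by (intro mult_mono) auto
        finally have le: "norm (indicator \<Omega> y *\<^sub>R (K y * Gi y)) \<le> (E / dist x y) * (Cg * sqrt (P y))" .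
        have "f y = ennreal (E / dist x y)" "g y = ennreal (Cg * sqrt (P y))"
          using yO yb by (simp_all add: f_def g_def)
        moreover have "0 \<le> E / dist x y" using E by simp
        ultimately have "f y * g y = ennreal ((E / dist x y) * (Cg * sqrt (P y)))"
          by (metis ennreal_mult')
        then show ?thesis using le by (simp add: ennreal_leI)
      qed
    qed
    finally have A: "ennreal (norm (LINT y:\<Omega>|lebesgue. K y * Gi y)) \<le> (\<integral>\<^sup>+y. f y * g y \<partial>lebesgue)" .
    have CS: "(\<integral>\<^sup>+y. f y * g y \<partial>lebesgue)\<^sup>2 \<le> (\<integral>\<^sup>+y. (f y)\<^sup>2 \<partial>lebesgue) * (\<integral>\<^sup>+y. (g y)\<^sup>2 \<partial>lebesgue)"
      by (rule Cauchy_Schwarz_nn_integral[OF fm gm])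
    have F: "(\<integral>\<^sup>+y. (f y)\<^sup>2 \<partial>lebesgue) \<le> ennreal (E\<^sup>2 * (8 * unit_ball_vol 3 * R))"
    proof -
      have "(\<integral>\<^sup>+y. (f y)\<^sup>2 \<partial>lebesgue) = (\<integral>\<^sup>+y. (f y)\<^sup>2 \<partial>lborel)"
        by (rule nn_integral_completion)
      also have "\<dots> = (\<integral>\<^sup>+y. ennreal (E\<^sup>2) * (indicator (ball x R) y * ennreal (1 / (dist x y)\<^sup>2)) \<partial>lborel)"
      proof (rule nn_integral_cong)
        fix y
        show "(f y)\<^sup>2 = ennreal (E\<^sup>2) * (indicator (ball x R) y * ennreal (1 / (dist x y)\<^sup>2))"
          unfolding f_def using E
          by (cases "y \<in> ball x R") (simp_all add: ennreal_power ennreal_mult[symmetric] power_divide)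
      qed
      also have "\<dots> = ennreal (E\<^sup>2) * (\<integral>\<^sup>+y. indicator (ball x R) y * ennreal (1 / (dist x y)\<^sup>2) \<partial>lborel)"
        by (rule nn_integral_cmult) measurable
      also have "\<dots> \<le> ennreal (E\<^sup>2) * ennreal (8 * unit_ball_vol 3 * R)"
        by (intro mult_left_mono inv_sq_integral R) simp
      also have "\<dots> = ennreal (E\<^sup>2 * (8 * unit_ball_vol 3 * R))" by (rule ennreal_mult'[symmetric]) simp
      finally show ?thesis .
    qed
    have G: "(\<integral>\<^sup>+y. (g y)\<^sup>2 \<partial>lebesgue) = ennreal (Cg\<^sup>2 * NP)"
    proof -
      have "(\<integral>\<^sup>+y. (g y)\<^sup>2 \<partial>lebesgue) = (\<integral>\<^sup>+y. ennreal (Cg\<^sup>2) * ennreal (indicator \<Omega> y *\<^sub>R P y) \<partial>lebesgue)"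
      proof (rule nn_integral_cong)
        fix y
        show "(g y)\<^sup>2 = ennreal (Cg\<^sup>2) * ennreal (indicator \<Omega> y *\<^sub>R P y)"
          unfolding g_def using Cg
          by (cases "y \<in> \<Omega>") (simp_all add: ennreal_power ennreal_mult[symmetric] power_mult_distrib P0)
      qed
      also have "\<dots> = ennreal (Cg\<^sup>2) * (\<integral>\<^sup>+y. ennreal (indicator \<Omega> y *\<^sub>R P y) \<partial>lebesgue)"
        by (rule nn_integral_cmult) measurable
      also have "(\<integral>\<^sup>+y. ennreal (indicator \<Omega> y *\<^sub>R P y) \<partial>lebesgue) = ennreal NP"
        unfolding NP_def set_lebesgue_integral_def
        using Pi P0 unfolding set_integrable_def
        by (intro nn_integral_eq_integral) (auto simp: indicator_def)
      finally show ?thesis using Cg NP0 by (simp add: ennreal_mult)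
    qed
    have "ennreal ((norm (LINT y:\<Omega>|lebesgue. K y * Gi y))\<^sup>2) = (ennreal (norm (LINT y:\<Omega>|lebesgue. K y * Gi y)))\<^sup>2"
      by (simp add: ennreal_power)
    also have "\<dots> \<le> (\<integral>\<^sup>+y. f y * g y \<partial>lebesgue)\<^sup>2" using A by (intro power_mono) auto
    also have "\<dots> \<le> (\<integral>\<^sup>+y. (f y)\<^sup>2 \<partial>lebesgue) * (\<integral>\<^sup>+y. (g y)\<^sup>2 \<partial>lebesgue)" by (rule CS)
    also have "\<dots> \<le> ennreal (E\<^sup>2 * (8 * unit_ball_vol 3 * R)) * (\<integral>\<^sup>+y. (g y)\<^sup>2 \<partial>lebesgue)"
      by (rule mult_right_mono[OF F]) simp
    also have "\<dots> = ennreal (E\<^sup>2 * (8 * unit_ball_vol 3 * R)) * ennreal (Cg\<^sup>2 * NP)"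
      by (simp only: G)
    also have "\<dots> = ennreal (E\<^sup>2 * Cg\<^sup>2 * (8 * unit_ball_vol 3 * R) * NP)"
    proof -
      have "0 \<le> E\<^sup>2 * (8 * unit_ball_vol 3 * R)" using R by simp
      then have "ennreal (E\<^sup>2 * (8 * unit_ball_vol 3 * R)) * ennreal (Cg\<^sup>2 * NP)
          = ennreal (E\<^sup>2 * (8 * unit_ball_vol 3 * R) * (Cg\<^sup>2 * NP))"
        by (rule ennreal_mult'[symmetric])
      also have "E\<^sup>2 * (8 * unit_ball_vol 3 * R) * (Cg\<^sup>2 * NP) = E\<^sup>2 * Cg\<^sup>2 * (8 * unit_ball_vol 3 * R) * NP"
        by (simp only: mult_ac)
      finally show ?thesis .
    qed
    finally have fin: "ennreal ((norm (LINT y:\<Omega>|lebesgue. K y * Gi y))\<^sup>2) \<le> ennreal (E\<^sup>2 * Cg\<^sup>2 * (8 * unit_ball_vol 3 * R) * NP)" .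
    have rhs0: "0 \<le> E\<^sup>2 * Cg\<^sup>2 * (8 * unit_ball_vol 3 * R) * NP" using R NP0 by simp
    have "(norm (LINT y:\<Omega>|lebesgue. K y * Gi y))\<^sup>2 \<le> E\<^sup>2 * Cg\<^sup>2 * (8 * unit_ball_vol 3 * R) * NP"
      using fin ennreal_le_iff[OF rhs0] by blast
    then show ?thesis by (simp only: NP_def)
  qed
qed

lemma cv_nth[simp]: "cv v $ j = complex_of_real (v $ j)"
  by (simp add: cv_def)

lemma ccross_bound:
  fixes a b :: "complex^3"
  assumes a: "\<And>j. cmod (a $ j) \<le> A" and b: "\<And>j. cmod (b $ j) \<le> 1"
  shows "cmod (ccross a b $ i) \<le> 2 * A"
proof -
  have m: "cmod (a $ j * b $ k) \<le> A" for j k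
  proof -
    have "cmod (a $ j * b $ k) = cmod (a $ j) * cmod (b $ k)" by (simp add: norm_mult)
    also have "\<dots> \<le> A * 1" using a b a[of 1] by (intro mult_mono) (auto intro: order_trans[OF norm_ge_zero])
    finally show ?thesis by simp
  qed
  have d: "cmod (a $ j * b $ k - a $ j' * b $ k') \<le> 2 * A" for j k j' k'
    using norm_triangle_ineq4[of "a $ j * b $ k" "a $ j' * b $ k'"] m[of j k] m[of j' k'] by linarith
  show ?thesis using exhaust_3[of i] d by (auto simp: ccross_def)
qed

lemma cdot_bound:
  fixes a b :: "complex^3"
  assumes a: "\<And>j. cmod (a $ j) \<le> A" and b: "\<And>j. cmod (b $ j) \<le> 1"
  shows "cmod (cdot a b) \<le> 3 * A"
proof -
  have m: "cmod (a $ j * b $ j) \<le> A" for j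
  proof -
    have "cmod (a $ j * b $ j) = cmod (a $ j) * cmod (b $ j)" by (simp add: norm_mult)
    also have "\<dots> \<le> A * 1" using a b a[of 1] by (intro mult_mono) (auto intro: order_trans[OF norm_ge_zero])
    finally show ?thesis by simp
  qed
  have "cmod (cdot a b) \<le> (\<Sum>j\<in>UNIV. cmod (a $ j * b $ j))" unfolding cdot_def by (rule norm_sum)
  also have "\<dots> \<le> (\<Sum>j\<in>(UNIV::3 set). A)" by (intro sum_mono m)
  also have "\<dots> = 3 * A" by simp
  finally show ?thesis .
qed

lemma G_bound:
  fixes \<epsilon>0 \<mu>0 :: real and \<Omega> :: "(real^3) set" and x y :: "real^3"
    and Je Jm :: "real^3 \<Rightarrow> real^3" and \<alpha> :: "real^3 \<Rightarrow> complex" and \<omega> :: complex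
  assumes nu: "norm (outer_normal \<Omega> x) = 1" and e: "\<epsilon>0 > 0" "\<mu>0 > 0"
    and S: "0 \<le> S"
    and b1: "\<And>j. \<bar>Je y $ j\<bar> \<le> S" and b2: "\<And>j. \<bar>Jm y $ j\<bar> \<le> S"
    and b3: "\<And>j. \<bar>wcurl \<Omega> Je y $ j\<bar> \<le> 2 * S" and b4: "\<And>j. \<bar>wcurl \<Omega> Jm y $ j\<bar> \<le> 2 * S"
  shows "cmod (Gfun \<Omega> \<epsilon>0 \<mu>0 \<alpha> Je Jm x y \<omega> $ i)
      \<le> (2 * \<mu>0 + 4 * \<epsilon>0 + 12) * (1 + cmod \<omega>) * (1 + cmod (\<alpha> x)) * S"
proof -
  define \<nu> where "\<nu> = cv (outer_normal \<Omega> x)"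
  define a where "a = (\<i> * \<omega> * complex_of_real \<mu>0) *s cv (Je y) + cv (wcurl \<Omega> Jm y)"
  define F where "F = Ffun \<Omega> \<epsilon>0 Je Jm y \<omega>"
  have nuj: "cmod (\<nu> $ j) \<le> 1" for j
    using component_le_norm_cart[of "outer_normal \<Omega> x" j] nu by (simp add: \<nu>_def)
  define Aa where "Aa = cmod \<omega> * \<mu>0 * S + 2 * S"
  define AF where "AF = cmod \<omega> * \<epsilon>0 * S + 2 * S"
  have aj: "cmod (a $ j) \<le> Aa" for j
  proof -
    have eq: "a $ j = \<i> * \<omega> * complex_of_real \<mu>0 * complex_of_real (Je y $ j) + complex_of_real (wcurl \<Omega> Jm y $ j)"
      by (simp add: a_def)
    have "cmod (a $ j) \<le> cmod (\<i> * \<omega> * complex_of_real \<mu>0 * complex_of_real (Je y $ j)) + cmod (complex_of_real (wcurl \<Omega> Jm y $ j))"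
      unfolding eq by (rule norm_triangle_ineq)
    also have "\<dots> = cmod \<omega> * \<mu>0 * \<bar>Je y $ j\<bar> + \<bar>wcurl \<Omega> Jm y $ j\<bar>"
      using e by (simp add: norm_mult)
    also have "\<dots> \<le> cmod \<omega> * \<mu>0 * S + 2 * S"
      using b1[of j] b4[of j] e by (intro add_mono mult_left_mono) auto
    finally show ?thesis by (simp add: Aa_def)
  qed
  have Fj: "cmod (F $ j) \<le> AF" for j
  proof -
    have eq: "F $ j = - \<i> * \<omega> * complex_of_real \<epsilon>0 * complex_of_real (Jm y $ j) + complex_of_real (wcurl \<Omega> Je y $ j)"
      by (simp add: F_def Ffun_def)
    have "cmod (F $ j) \<le> cmod (- \<i> * \<omega> * complex_of_real \<epsilon>0 * complex_of_real (Jm y $ j)) + cmod (complex_of_real (wcurl \<Omega> Je y $ j))"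
      unfolding eq by (rule norm_triangle_ineq)
    also have "\<dots> = cmod \<omega> * \<epsilon>0 * \<bar>Jm y $ j\<bar> + \<bar>wcurl \<Omega> Je y $ j\<bar>"
      using e by (simp add: norm_mult)
    also have "\<dots> \<le> cmod \<omega> * \<epsilon>0 * S + 2 * S"
      using b2[of j] b3[of j] e by (intro add_mono mult_left_mono) auto
    finally show ?thesis by (simp add: AF_def)
  qed
  have c1: "cmod (ccross a \<nu> $ i) \<le> 2 * Aa" by (rule ccross_bound[OF aj nuj])
  have c2: "cmod (cdot F \<nu>) \<le> 3 * AF" by (rule cdot_bound[OF Fj nuj])
  have c3: "cmod ((F - cdot F \<nu> *s \<nu>) $ i) \<le> 4 * AF"
  proof -
    have "cmod ((F - cdot F \<nu> *s \<nu>) $ i) \<le> cmod (F $ i) + cmod (cdot F \<nu>) * cmod (\<nu> $ i)"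
      using norm_triangle_ineq4[of "F $ i" "cdot F \<nu> * \<nu> $ i"] by (simp add: norm_mult)
    also have "\<dots> \<le> AF + 3 * AF * 1"
      using Fj[of i] c2 nuj[of i] S e by (intro add_mono mult_mono) (auto simp: AF_def)
    finally show ?thesis by simp
  qed
  have "Gfun \<Omega> \<epsilon>0 \<mu>0 \<alpha> Je Jm x y \<omega> $ i = ccross a \<nu> $ i - \<alpha> x * (F - cdot F \<nu> *s \<nu>) $ i"
    unfolding Gfun_def Let_def a_def F_def \<nu>_def by (simp add: right_diff_distrib)
  hence "cmod (Gfun \<Omega> \<epsilon>0 \<mu>0 \<alpha> Je Jm x y \<omega> $ i) \<le> cmod (ccross a \<nu> $ i) + cmod (\<alpha> x) * cmod ((F - cdot F \<nu> *s \<nu>) $ i)"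
    using norm_triangle_ineq4[of "ccross a \<nu> $ i" "\<alpha> x * (F - cdot F \<nu> *s \<nu>) $ i"] by (simp add: norm_mult)
  also have "\<dots> \<le> 2 * Aa + cmod (\<alpha> x) * (4 * AF)"
    using c1 c3 by (intro add_mono mult_left_mono) auto
  also have "\<dots> \<le> (2 * \<mu>0 + 4 * \<epsilon>0 + 12) * (1 + cmod \<omega>) * (1 + cmod (\<alpha> x)) * S"
  proof -
    define w where "w = cmod \<omega>"
    define al where "al = cmod (\<alpha> x)"
    have w: "w \<ge> 0" and al: "al \<ge> 0" by (simp_all add: w_def al_def)
    have "2 * Aa + al * (4 * AF) = 2 * \<mu>0 * (w * S) + 4 * S + 4 * \<epsilon>0 * (w * al * S) + 8 * (al * S)"
      by (simp add: Aa_def AF_def w_def algebra_simps)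
    also have "\<dots> \<le> (2 * \<mu>0 + 4 * \<epsilon>0 + 12) * (S + w * S + al * S + w * al * S)"
    proof -
      have p: "0 \<le> w * S" "0 \<le> al * S" "0 \<le> w * al * S" using w al S by simp_all
      define Cc where "Cc = 2 * \<mu>0 + 4 * \<epsilon>0 + 12"
      have q1: "2 * \<mu>0 * (w * S) \<le> Cc * (w * S)" using p e unfolding Cc_def by (intro mult_right_mono) auto
      have q2: "4 * S \<le> Cc * S" using S e unfolding Cc_def by (intro mult_right_mono) auto
      have q3: "4 * \<epsilon>0 * (w * al * S) \<le> Cc * (w * al * S)" using p e unfolding Cc_def by (intro mult_right_mono) auto
      have q4: "8 * (al * S) \<le> Cc * (al * S)" using p e unfolding Cc_def by (intro mult_right_mono) auto
      have q5: "0 \<le> Cc * (al * S)" "0 \<le> Cc * (w * S)" using p e unfolding Cc_def by simp_all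
      have "Cc * (S + w * S + al * S + w * al * S) = Cc * S + Cc * (w * S) + Cc * (al * S) + Cc * (w * al * S)"
        by (simp only: distrib_left)
      then show ?thesis unfolding Cc_def[symmetric] using q1 q2 q3 q4 q5 by linarith
    qed
    also have "\<dots> = (2 * \<mu>0 + 4 * \<epsilon>0 + 12) * (1 + w) * (1 + al) * S" by (simp add: algebra_simps)
    finally show ?thesis by (simp add: w_def al_def)
  qed
  finally show ?thesis .
qed

definition Q1 :: "(real^3) set \<Rightarrow> (real^3 \<Rightarrow> real^3) \<Rightarrow> real^3 \<Rightarrow> real" where
  "Q1 \<Omega> J y = (\<Sum>i\<in>UNIV. (J y $ i)\<^sup>2 + (\<Sum>j\<in>UNIV. (wpd \<Omega> (\<lambda>y. J y $ i) j y)\<^sup>2))"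

lemma Q1_nonneg: "0 \<le> Q1 \<Omega> J y"
  unfolding Q1_def by (intro sum_nonneg add_nonneg_nonneg) auto

lemma Q1_comp: "\<bar>J y $ i\<bar> \<le> sqrt (Q1 \<Omega> J y)"
proof -
  have "(J y $ i)\<^sup>2 \<le> (J y $ i)\<^sup>2 + (\<Sum>j\<in>UNIV. (wpd \<Omega> (\<lambda>y. J y $ i) j y)\<^sup>2)"
    by (simp add: sum_nonneg)
  also have "\<dots> \<le> Q1 \<Omega> J y" unfolding Q1_def
    by (rule member_le_sum[where f="\<lambda>i. (J y $ i)\<^sup>2 + (\<Sum>j\<in>UNIV. (wpd \<Omega> (\<lambda>y. J y $ i) j y)\<^sup>2)"])
       (auto intro!: add_nonneg_nonneg sum_nonneg)
  finally show ?thesis by (metis real_sqrt_abs real_sqrt_le_mono)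
qed

lemma Q1_wpd: "\<bar>wpd \<Omega> (\<lambda>y. J y $ i) j y\<bar> \<le> sqrt (Q1 \<Omega> J y)"
proof -
  have "(wpd \<Omega> (\<lambda>y. J y $ i) j y)\<^sup>2 \<le> (\<Sum>j\<in>UNIV. (wpd \<Omega> (\<lambda>y. J y $ i) j y)\<^sup>2)"
    by (rule member_le_sum) auto
  also have "\<dots> \<le> (J y $ i)\<^sup>2 + (\<Sum>j\<in>UNIV. (wpd \<Omega> (\<lambda>y. J y $ i) j y)\<^sup>2)"
    by simp
  also have "\<dots> \<le> Q1 \<Omega> J y" unfolding Q1_def
    by (rule member_le_sum[where f="\<lambda>i. (J y $ i)\<^sup>2 + (\<Sum>j\<in>UNIV. (wpd \<Omega> (\<lambda>y. J y $ i) j y)\<^sup>2)"])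
       (auto intro!: add_nonneg_nonneg sum_nonneg)
  finally show ?thesis by (metis real_sqrt_abs real_sqrt_le_mono)
qed

lemma Q1_wcurl: "\<bar>wcurl \<Omega> J y $ j\<bar> \<le> 2 * sqrt (Q1 \<Omega> J y)"
proof -
  have d: "\<bar>wpd \<Omega> (\<lambda>y. J y $ a) b y - wpd \<Omega> (\<lambda>y. J y $ c) d y\<bar> \<le> 2 * sqrt (Q1 \<Omega> J y)" for a b c d
    using Q1_wpd[of \<Omega> J a b y] Q1_wpd[of \<Omega> J c d y] by linarith
  show ?thesis using exhaust_3[of j] d by (auto simp: wcurl_def)
qed

lemma set_int_sum:
  fixes f :: "'i \<Rightarrow> 'a \<Rightarrow> real"
  assumes "finite I" "\<And>i. i \<in> I \<Longrightarrow> set_integrable M A (f i)"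
  shows "set_integrable M A (\<lambda>x. \<Sum>i\<in>I. f i x) \<and>
    set_lebesgue_integral M A (\<lambda>x. \<Sum>i\<in>I. f i x) = (\<Sum>i\<in>I. set_lebesgue_integral M A (f i))"
proof -
  have eq: "(\<lambda>x. indicator A x *\<^sub>R (\<Sum>i\<in>I. f i x)) = (\<lambda>x. \<Sum>i\<in>I. indicator A x *\<^sub>R f i x)"
    by (rule ext) (simp only: scaleR_sum_right)
  show ?thesis using assms unfolding set_integrable_def set_lebesgue_integral_def eq
    by (intro conjI Bochner_Integration.integrable_sum Bochner_Integration.integral_sum) auto
qed

lemma set_int_add:
  fixes f g :: "'a \<Rightarrow> real"
  assumes "set_integrable M A f" "set_integrable M A g"
  shows "set_integrable M A (\<lambda>x. f x + g x) \<and>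
    set_lebesgue_integral M A (\<lambda>x. f x + g x) = set_lebesgue_integral M A f + set_lebesgue_integral M A g"
  using assms unfolding set_integrable_def set_lebesgue_integral_def
  by (simp add: distrib_left)

lemma Q1_H1:
  assumes H: "in_H1 \<Omega> J"
  shows "set_integrable lebesgue \<Omega> (Q1 \<Omega> J) \<and> (LINT y:\<Omega>|lebesgue. Q1 \<Omega> J y) = H1_norm_sq \<Omega> J"
proof -
  have L2c: "set_integrable lebesgue \<Omega> (\<lambda>x. (J x $ i)\<^sup>2)" for i
    using H unfolding in_H1_def L2_def by blast
  have L2w: "set_integrable lebesgue \<Omega> (\<lambda>x. (wpd \<Omega> (\<lambda>y. J y $ i) j x)\<^sup>2)" for i j
  proof -
    have "\<exists>g. L2 \<Omega> g \<and> is_weak_pderiv \<Omega> (\<lambda>x. J x $ i) j g" using H unfolding in_H1_def by blast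
    hence "L2 \<Omega> (wpd \<Omega> (\<lambda>x. J x $ i) j)" unfolding wpd_def by (rule someI2_ex) blast
    then show ?thesis unfolding L2_def by blast
  qed
  have inner: "set_integrable lebesgue \<Omega> (\<lambda>x. \<Sum>j\<in>UNIV. (wpd \<Omega> (\<lambda>y. J y $ i) j x)\<^sup>2) \<and>
     (LINT x:\<Omega>|lebesgue. \<Sum>j\<in>UNIV. (wpd \<Omega> (\<lambda>y. J y $ i) j x)\<^sup>2)
       = (\<Sum>j\<in>UNIV. LINT x:\<Omega>|lebesgue. (wpd \<Omega> (\<lambda>y. J y $ i) j x)\<^sup>2)" for i
    by (rule set_int_sum) (auto intro: L2w)
  have mid: "set_integrable lebesgue \<Omega> (\<lambda>x. (J x $ i)\<^sup>2 + (\<Sum>j\<in>UNIV. (wpd \<Omega> (\<lambda>y. J y $ i) j x)\<^sup>2)) \<and>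
     (LINT x:\<Omega>|lebesgue. (J x $ i)\<^sup>2 + (\<Sum>j\<in>UNIV. (wpd \<Omega> (\<lambda>y. J y $ i) j x)\<^sup>2))
       = (LINT x:\<Omega>|lebesgue. (J x $ i)\<^sup>2) + (\<Sum>j\<in>UNIV. LINT x:\<Omega>|lebesgue. (wpd \<Omega> (\<lambda>y. J y $ i) j x)\<^sup>2)" for i
    using set_int_add[OF L2c[of i] conjunct1[OF inner[of i]]] conjunct2[OF inner[of i]] by simp
  have outer: "set_integrable lebesgue \<Omega> (\<lambda>x. \<Sum>i\<in>UNIV. (J x $ i)\<^sup>2 + (\<Sum>j\<in>UNIV. (wpd \<Omega> (\<lambda>y. J y $ i) j x)\<^sup>2)) \<and>
     (LINT x:\<Omega>|lebesgue. \<Sum>i\<in>UNIV. (J x $ i)\<^sup>2 + (\<Sum>j\<in>UNIV. (wpd \<Omega> (\<lambda>y. J y $ i) j x)\<^sup>2))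
       = (\<Sum>i\<in>UNIV. LINT x:\<Omega>|lebesgue. (J x $ i)\<^sup>2 + (\<Sum>j\<in>UNIV. (wpd \<Omega> (\<lambda>y. J y $ i) j x)\<^sup>2))"
    by (rule set_int_sum) (auto intro: conjunct1[OF mid])
  show ?thesis
    using outer mid unfolding Q1_def[abs_def] H1_norm_sq_def by simp
qed

lemma kern1:
  fixes \<kappa> :: complex
  assumes d: "d > 0" "d \<le> D" and B: "\<bar>Im \<kappa>\<bar> \<le> B" "0 \<le> B"
  shows "cmod (exp (\<i> * \<kappa> * complex_of_real d) / complex_of_real (4 * pi * d)) \<le> (exp (B * D) / (4 * pi)) / d"
proof -
  have "cmod (exp (\<i> * \<kappa> * complex_of_real d) / complex_of_real (4 * pi * d)) = exp (- Im \<kappa> * d) / (4 * pi * d)"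
    using d by (simp add: norm_divide norm_exp_eq_Re norm_mult)
  also have "\<dots> \<le> exp (B * D) / (4 * pi * d)"
  proof -
    have "- Im \<kappa> * d \<le> B * d" using B d by (intro mult_right_mono) auto
    also have "\<dots> \<le> B * D" using B d by (intro mult_left_mono) auto
    finally show ?thesis using d by (intro divide_right_mono) auto
  qed
  also have "\<dots> = (exp (B * D) / (4 * pi)) / d" by simp
  finally show ?thesis .
qed

lemma kern2:
  fixes \<kappa> :: complex
  assumes d: "d > 0" "d \<le> D" and B: "\<bar>Im \<kappa>\<bar> \<le> B" "0 \<le> B"
  shows "cmod (exp (- \<i> * \<kappa> * complex_of_real d) / complex_of_real (4 * pi * d)) \<le> (exp (B * D) / (4 * pi)) / d"
proof -
  have "cmod (exp (- \<i> * \<kappa> * complex_of_real d) / complex_of_real (4 * pi * d)) = exp (Im \<kappa> * d) / (4 * pi * d)"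
    using d by (simp add: norm_divide norm_exp_eq_Re norm_mult)
  also have "\<dots> \<le> exp (B * D) / (4 * pi * d)"
  proof -
    have "Im \<kappa> * d \<le> B * d" using B d by (intro mult_right_mono) auto
    also have "\<dots> \<le> B * D" using B d by (intro mult_left_mono) auto
    finally show ?thesis using d by (intro divide_right_mono) auto
  qed
  also have "\<dots> = (exp (B * D) / (4 * pi)) / d" by simp
  finally show ?thesis .
qed

lemma cdot_sq_bound:
  fixes a b :: "complex^3"
  assumes a: "\<And>i. (cmod (a $ i))\<^sup>2 \<le> X" and b: "\<And>i. (cmod (b $ i))\<^sup>2 \<le> X"
  shows "cmod (cdot a b) \<le> 3 * X"
proof -
  have m: "cmod (a $ i * b $ i) \<le> X" for i
  proof -
    have "0 \<le> (cmod (a $ i) - cmod (b $ i))\<^sup>2" by simp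
    hence "2 * (cmod (a $ i) * cmod (b $ i)) \<le> (cmod (a $ i))\<^sup>2 + (cmod (b $ i))\<^sup>2"
      by (simp add: power2_diff)
    then show ?thesis using a[of i] b[of i] by (simp add: norm_mult)
  qed
  have "cmod (cdot a b) \<le> (\<Sum>j\<in>UNIV. cmod (a $ j * b $ j))" unfolding cdot_def by (rule norm_sum)
  also have "\<dots> \<le> (\<Sum>j\<in>(UNIV::3 set). X)" by (intro sum_mono m)
  also have "\<dots> = 3 * X" by simp
  finally show ?thesis .
qed

lemma segment_facts:
  assumes "\<omega> \<in> closed_segment 0 k"
  shows "cmod \<omega> \<le> cmod k" "\<bar>Im \<omega>\<bar> \<le> \<bar>Im k\<bar>"
proof -
  obtain u where u: "0 \<le> u" "u \<le> 1" "\<omega> = u *\<^sub>R k" using assms unfolding closed_segment_def by auto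
  show "cmod \<omega> \<le> cmod k" using u by (simp add: mult_left_le_one_le)
  show "\<bar>Im \<omega>\<bar> \<le> \<bar>Im k\<bar>" using u by (simp add: abs_mult mult_left_le_one_le)
qed

lemma cubic_bound: fixes t :: real assumes "t \<ge> 0" shows "t * (1 + t)\<^sup>2 \<le> 4 * (1 + t ^ 3)"
proof -
  have eq: "t * (1 + t)\<^sup>2 = t + 2 * t\<^sup>2 + t ^ 3" by (simp add: power2_eq_square power3_eq_cube algebra_simps)
  show ?thesis
  proof (cases "t \<le> 1")
    case True
    have "t\<^sup>2 \<le> 1" using True assms by (simp add: power_le_one)
    moreover have "0 \<le> t ^ 3" using assms by simp
    ultimately show ?thesis unfolding eq using True by (smt (verit))
  next
    case False
    have "t \<le> t ^ 3" using power_increasing[of 1 3 t] False by simp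
    moreover have "t ^ 2 \<le> t ^ 3" using False by (intro power_increasing) auto
    ultimately show ?thesis unfolding eq by (smt (verit))
  qed
qed

lemma contour_bound0:
  assumes "0 \<le> B" "\<And>\<omega>. \<omega> \<in> closed_segment 0 k \<Longrightarrow> cmod (f \<omega>) \<le> B"
  shows "cmod (contour_integral (linepath 0 k) f) \<le> B * cmod k"
proof (cases "f contour_integrable_on linepath 0 k")
  case True
  then show ?thesis using contour_integral_bound_linepath[OF True assms] by simp
next
  case False
  then show ?thesis using assms(1) by (simp add: not_integrable_contour_integral)
qed

lemma frontier_sets: "frontier \<Omega> \<in> sets surface_measure"
proof -
  have "sets surface_measure = sigma_sets UNIV (sets borel)"
    unfolding surface_measure_def by (rule sets_measure_of) simp
  moreover have "frontier \<Omega> \<in> sets borel" by (simp add: frontier_closed borel_closed)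
  ultimately show ?thesis by (simp add: sigma_sets.Basic)
qed


theorem lemma3p1:
  fixes \<Omega> :: "(real^3) set" and \<epsilon>0 \<mu>0 :: real and \<alpha> :: "real^3 \<Rightarrow> complex"
  assumes "open \<Omega>" and "connected \<Omega>" and "bounded \<Omega>" and "\<Omega> \<noteq> {}"
    and "C2_boundary \<Omega>"
    and "\<epsilon>0 > 0" and "\<mu>0 > 0"
    and "Linfty_boundary \<Omega> \<alpha>"
  shows "\<exists>C. \<forall>Je Jm k.
           in_H1 \<Omega> Je \<and> in_H1 \<Omega> Jm \<and> supp_in \<Omega> Je \<and> supp_in \<Omega> Jm \<longrightarrow>
           cmod (I0 \<Omega> \<epsilon>0 \<mu>0 \<alpha> Je Jm k)
             \<le> C * (1 + cmod k ^ 3) * (H1_norm_sq \<Omega> Je + H1_norm_sq \<Omega> Jm)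
                 * exp (2 * diameter \<Omega> * sqrt (\<epsilon>0 * \<mu>0) * \<bar>Im k\<bar>)"
proof -
  note op = assms(1) and bd = assms(3) and C2 = assms(5) and e0 = assms(6) and m0 = assms(7)
  obtain Ma0 where Ma0: "AE x in surface_measure. x \<in> frontier \<Omega> \<longrightarrow> cmod (\<alpha> x) \<le> Ma0"
    using assms(8) unfolding Linfty_boundary_def by blast
  define Ma where "Ma = max 0 Ma0"
  have Ma: "AE x in surface_measure. x \<in> frontier \<Omega> \<longrightarrow> cmod (\<alpha> x) \<le> Ma"
    using Ma0 by eventually_elim (auto simp: Ma_def)
  have Ma_nn: "0 \<le> Ma" by (simp add: Ma_def)
  have fin: "emeasure surface_measure (frontier \<Omega>) < \<infinity>" by (rule frontier_finite[OF op bd C2])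
  have Fsets: "frontier \<Omega> \<in> sets surface_measure" by (rule frontier_sets)
  define \<mu>F where "\<mu>F = measure surface_measure (frontier \<Omega>)"
  have \<mu>F: "0 \<le> \<mu>F" by (simp add: \<mu>F_def)
  define D where "D = diameter \<Omega>"
  have D: "0 \<le> D" unfolding D_def using bd by (rule diameter_ge_0)
  define R where "R = D + 1"
  have R: "R > 0" using D by (simp add: R_def)
  define s where "s = sqrt (\<epsilon>0 * \<mu>0)"
  have s: "0 \<le> s" using e0 m0 by (simp add: s_def)
  define Cg0 where "Cg0 = 2 * \<mu>0 + 4 * \<epsilon>0 + 12"
  have Cg0: "0 \<le> Cg0" using e0 m0 by (simp add: Cg0_def)
  define V where "V = unit_ball_vol 3"
  have V: "0 \<le> V" by (simp add: V_def less_imp_le)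
  define C where "C = 24 / (16 * pi\<^sup>2) * \<mu>F * Cg0\<^sup>2 * (1 + Ma)\<^sup>2 * (8 * V * R)"
  have distD: "dist x y \<le> D" if "x \<in> frontier \<Omega>" "y \<in> \<Omega>" for x y
  proof -
    have "x \<in> closure \<Omega>" "y \<in> closure \<Omega>" using that closure_subset by (auto simp: frontier_def)
    then have "dist x y \<le> diameter (closure \<Omega>)"
      using diameter_bounded_bound[of "closure \<Omega>" x y] bounded_closure[OF bd] by (simp add: dist_norm)
    then show ?thesis using diameter_closure[OF bd] by (simp add: D_def)
  qed
  have xnot: "x \<notin> \<Omega>" if "x \<in> frontier \<Omega>" for x
    using that op by (simp add: frontier_def interior_open)
  show ?thesis
  proof (intro exI[of _ C] allI impI)
    fix Je Jm :: "real^3 \<Rightarrow> real^3" and k :: complex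
    assume H: "in_H1 \<Omega> Je \<and> in_H1 \<Omega> Jm \<and> supp_in \<Omega> Je \<and> supp_in \<Omega> Jm"
    define P where "P y = Q1 \<Omega> Je y + Q1 \<Omega> Jm y" for y
    have P0: "0 \<le> P y" for y by (simp add: P_def Q1_nonneg add_nonneg_nonneg)
    have QJe: "set_integrable lebesgue \<Omega> (Q1 \<Omega> Je) \<and> (LINT y:\<Omega>|lebesgue. Q1 \<Omega> Je y) = H1_norm_sq \<Omega> Je"
      using H by (intro Q1_H1) blast
    have QJm: "set_integrable lebesgue \<Omega> (Q1 \<Omega> Jm) \<and> (LINT y:\<Omega>|lebesgue. Q1 \<Omega> Jm y) = H1_norm_sq \<Omega> Jm"
      using H by (intro Q1_H1) blast
    have Padd: "set_integrable lebesgue \<Omega> P \<and> (LINT y:\<Omega>|lebesgue. P y) = H1_norm_sq \<Omega> Je + H1_norm_sq \<Omega> Jm"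
      using set_int_add[OF conjunct1[OF QJe] conjunct1[OF QJm]] QJe QJm unfolding P_def[abs_def] by simp
    define NP where "NP = H1_norm_sq \<Omega> Je + H1_norm_sq \<Omega> Jm"
    have NP: "0 \<le> NP"
    proof -
      have "0 \<le> (LINT y:\<Omega>|lebesgue. P y)" unfolding set_lebesgue_integral_def
        using P0 by (intro integral_nonneg_AE) (auto simp: indicator_def)
      then show ?thesis using Padd by (simp add: NP_def)
    qed
    define E where "E = exp (s * \<bar>Im k\<bar> * D) / (4 * pi)"
    have E: "0 \<le> E" by (simp add: E_def)
    define Cg where "Cg = Cg0 * (1 + cmod k) * (1 + Ma)"
    have Cg: "0 \<le> Cg" using Cg0 Ma_nn by (simp add: Cg_def)
    define X where "X = E\<^sup>2 * Cg\<^sup>2 * (8 * V * R) * NP"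
    have X: "0 \<le> X" using NP R V by (simp add: X_def)
    have Gb: "cmod (Gfun \<Omega> \<epsilon>0 \<mu>0 \<alpha> Je Jm x y w $ i) \<le> Cg * sqrt (P y)"
      if x: "x \<in> frontier \<Omega>" and ax: "cmod (\<alpha> x) \<le> Ma" and w: "cmod w \<le> cmod k" for x y w i
    proof -
      have nu: "norm (outer_normal \<Omega> x) = 1" by (rule frontier_normal[OF op C2 x])
      have sq1: "sqrt (Q1 \<Omega> Je y) \<le> sqrt (P y)" "sqrt (Q1 \<Omega> Jm y) \<le> sqrt (P y)"
        using Q1_nonneg[of \<Omega> Je y] Q1_nonneg[of \<Omega> Jm y] by (simp_all add: P_def)
      have "cmod (Gfun \<Omega> \<epsilon>0 \<mu>0 \<alpha> Je Jm x y w $ i) \<le> Cg0 * (1 + cmod w) * (1 + cmod (\<alpha> x)) * sqrt (P y)"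
        unfolding Cg0_def
      proof (rule G_bound[OF nu e0 m0])
        show "0 \<le> sqrt (P y)" using P0[of y] by simp
        show "\<bar>Je y $ j\<bar> \<le> sqrt (P y)" for j using Q1_comp[of Je y j \<Omega>] sq1 by linarith
        show "\<bar>Jm y $ j\<bar> \<le> sqrt (P y)" for j using Q1_comp[of Jm y j \<Omega>] sq1 by linarith
        show "\<bar>wcurl \<Omega> Je y $ j\<bar> \<le> 2 * sqrt (P y)" for j using Q1_wcurl[of \<Omega> Je y j] sq1 by linarith
        show "\<bar>wcurl \<Omega> Jm y $ j\<bar> \<le> 2 * sqrt (P y)" for j using Q1_wcurl[of \<Omega> Jm y j] sq1 by linarith
      qed
      also have "\<dots> \<le> Cg0 * (1 + cmod k) * (1 + Ma) * sqrt (P y)"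
        using w ax Cg0 P0[of y] by (intro mult_right_mono mult_mono) auto
      finally show ?thesis by (simp add: Cg_def)
    qed
    have ptw: "cmod (cdot
         (\<chi> i. LINT y:\<Omega>|lebesgue. exp (\<i> * (w * complex_of_real s) * complex_of_real (dist x y)) /
              complex_of_real (4 * pi * dist x y) * Gfun \<Omega> \<epsilon>0 \<mu>0 \<alpha> Je Jm x y w $ i)
         (\<chi> i. LINT y:\<Omega>|lebesgue. exp (- \<i> * (w * complex_of_real s) * complex_of_real (dist x y)) /
              complex_of_real (4 * pi * dist x y) * Gfun \<Omega> \<epsilon>0 \<mu>0 \<alpha> Je Jm x y (- w) $ i)) \<le> 3 * X"
      if wk: "w \<in> closed_segment 0 k" and x: "x \<in> frontier \<Omega>" and ax: "cmod (\<alpha> x) \<le> Ma" for w x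
    proof (rule cdot_sq_bound)
      have w1: "cmod w \<le> cmod k" and w2: "\<bar>Im w\<bar> \<le> \<bar>Im k\<bar>" using segment_facts[OF wk] by auto
      have imk: "\<bar>Im (w * complex_of_real s)\<bar> \<le> s * \<bar>Im k\<bar>"
        using w2 s by (simp add: abs_mult mult.commute mult_left_mono)
      have sub: "\<Omega> \<subseteq> ball x R"
      proof
        fix y assume y: "y \<in> \<Omega>" then show "y \<in> ball x R" using distD[OF x y] by (simp add: R_def)
      qed
      have dpos: "0 < dist x y" if "y \<in> \<Omega>" for y using xnot[OF x] that by auto
      have X_eq: "E\<^sup>2 * Cg\<^sup>2 * (8 * unit_ball_vol 3 * R) * (LINT y:\<Omega>|lebesgue. P y) = X"
        using Padd by (simp add: X_def V_def NP_def)
      fix i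
      show "(cmod ((\<chi> i. LINT y:\<Omega>|lebesgue. exp (\<i> * (w * complex_of_real s) * complex_of_real (dist x y)) /
              complex_of_real (4 * pi * dist x y) * Gfun \<Omega> \<epsilon>0 \<mu>0 \<alpha> Je Jm x y w $ i) $ i))\<^sup>2 \<le> X"
        unfolding vec_lambda_beta X_eq[symmetric]
      proof (rule inner_bound[OF xnot[OF x] R sub E _ Cg _ P0 conjunct1[OF Padd]])
        fix y assume y: "y \<in> \<Omega>"
        show "cmod (exp (\<i> * (w * complex_of_real s) * complex_of_real (dist x y)) / complex_of_real (4 * pi * dist x y)) \<le> E / dist x y"
          unfolding E_def by (rule kern1[OF dpos[OF y] distD[OF x y] imk]) (use s in simp)
        show "cmod (Gfun \<Omega> \<epsilon>0 \<mu>0 \<alpha> Je Jm x y w $ i) \<le> Cg * sqrt (P y)"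
          by (rule Gb[OF x ax w1])
      qed
      show "(cmod ((\<chi> i. LINT y:\<Omega>|lebesgue. exp (- \<i> * (w * complex_of_real s) * complex_of_real (dist x y)) /
              complex_of_real (4 * pi * dist x y) * Gfun \<Omega> \<epsilon>0 \<mu>0 \<alpha> Je Jm x y (- w) $ i) $ i))\<^sup>2 \<le> X"
        unfolding vec_lambda_beta X_eq[symmetric]
      proof (rule inner_bound[OF xnot[OF x] R sub E _ Cg _ P0 conjunct1[OF Padd]])
        fix y assume y: "y \<in> \<Omega>"
        show "cmod (exp (- \<i> * (w * complex_of_real s) * complex_of_real (dist x y)) / complex_of_real (4 * pi * dist x y)) \<le> E / dist x y"
          unfolding E_def by (rule kern2[OF dpos[OF y] distD[OF x y] imk]) (use s in simp)
        show "cmod (Gfun \<Omega> \<epsilon>0 \<mu>0 \<alpha> Je Jm x y (- w) $ i) \<le> Cg * sqrt (P y)"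
          by (rule Gb[OF x ax]) (use w1 in simp)
      qed
    qed
    have seg: "cmod (let \<kappa> = w * complex_of_real s in
       LINT x:frontier \<Omega>|surface_measure.
         cdot (\<chi> i. LINT y:\<Omega>|lebesgue.
                 exp (\<i> * \<kappa> * dist x y) / (4 * pi * dist x y) * Gfun \<Omega> \<epsilon>0 \<mu>0 \<alpha> Je Jm x y w $ i)
              (\<chi> i. LINT y:\<Omega>|lebesgue.
                 exp (- \<i> * \<kappa> * dist x y) / (4 * pi * dist x y) * Gfun \<Omega> \<epsilon>0 \<mu>0 \<alpha> Je Jm x y (- w) $ i))
        \<le> 3 * X * \<mu>F"
      if wk: "w \<in> closed_segment 0 k" for w
      unfolding Let_def \<mu>F_def
    proof (rule set_integral_bound_finite[OF Fsets fin])
      show "0 \<le> 3 * X" using X by simp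
      show "AE x in surface_measure. x \<in> frontier \<Omega> \<longrightarrow> cmod (cdot
         (\<chi> i. LINT y:\<Omega>|lebesgue. exp (\<i> * (w * complex_of_real s) * complex_of_real (dist x y)) /
              complex_of_real (4 * pi * dist x y) * Gfun \<Omega> \<epsilon>0 \<mu>0 \<alpha> Je Jm x y w $ i)
         (\<chi> i. LINT y:\<Omega>|lebesgue. exp (- \<i> * (w * complex_of_real s) * complex_of_real (dist x y)) /
              complex_of_real (4 * pi * dist x y) * Gfun \<Omega> \<epsilon>0 \<mu>0 \<alpha> Je Jm x y (- w) $ i)) \<le> 3 * X"
        using Ma by eventually_elim (use ptw[OF wk] in blast)
    qed
    have cb: "cmod (contour_integral (linepath 0 k) (\<lambda>w. let \<kappa> = w * complex_of_real s in
       LINT x:frontier \<Omega>|surface_measure.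
         cdot (\<chi> i. LINT y:\<Omega>|lebesgue.
                 exp (\<i> * \<kappa> * dist x y) / (4 * pi * dist x y) * Gfun \<Omega> \<epsilon>0 \<mu>0 \<alpha> Je Jm x y w $ i)
              (\<chi> i. LINT y:\<Omega>|lebesgue.
                 exp (- \<i> * \<kappa> * dist x y) / (4 * pi * dist x y) * Gfun \<Omega> \<epsilon>0 \<mu>0 \<alpha> Je Jm x y (- w) $ i))) \<le> 3 * X * \<mu>F * cmod k"
      by (rule contour_bound0[OF _ seg]) (use X \<mu>F in simp_all)
    have I0eq: "I0 \<Omega> \<epsilon>0 \<mu>0 \<alpha> Je Jm k = 2 * contour_integral (linepath 0 k) (\<lambda>w. let \<kappa> = w * complex_of_real s in
       LINT x:frontier \<Omega>|surface_measure.
         cdot (\<chi> i. LINT y:\<Omega>|lebesgue.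
                 exp (\<i> * \<kappa> * dist x y) / (4 * pi * dist x y) * Gfun \<Omega> \<epsilon>0 \<mu>0 \<alpha> Je Jm x y w $ i)
              (\<chi> i. LINT y:\<Omega>|lebesgue.
                 exp (- \<i> * \<kappa> * dist x y) / (4 * pi * dist x y) * Gfun \<Omega> \<epsilon>0 \<mu>0 \<alpha> Je Jm x y (- w) $ i))"
      unfolding I0_def s_def by (rule refl)
    have "cmod (I0 \<Omega> \<epsilon>0 \<mu>0 \<alpha> Je Jm k) \<le> 2 * (3 * X * \<mu>F * cmod k)"
      unfolding I0eq norm_mult using cb by simp
    also have "\<dots> = 6 * (\<mu>F * Cg0\<^sup>2 * (1 + Ma)\<^sup>2 * (8 * V * R) * NP * (exp (s * \<bar>Im k\<bar> * D))\<^sup>2 / (16 * pi\<^sup>2))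
        * (cmod k * (1 + cmod k)\<^sup>2)"
      by (simp add: X_def E_def Cg_def power_mult_distrib power_divide mult_ac)
    also have "\<dots> \<le> 6 * (\<mu>F * Cg0\<^sup>2 * (1 + Ma)\<^sup>2 * (8 * V * R) * NP * (exp (s * \<bar>Im k\<bar> * D))\<^sup>2 / (16 * pi\<^sup>2))
        * (4 * (1 + cmod k ^ 3))"
      using cubic_bound[of "cmod k"] \<mu>F NP R V by (intro mult_left_mono) auto
    also have "\<dots> = C * (1 + cmod k ^ 3) * NP * exp (2 * D * s * \<bar>Im k\<bar>)"
    proof -
      have "(exp (s * \<bar>Im k\<bar> * D))\<^sup>2 = exp (2 * D * s * \<bar>Im k\<bar>)"
        by (simp add: power2_eq_square exp_add[symmetric] algebra_simps)
      then show ?thesis by (simp add: C_def field_simps)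
    qed
    finally show "cmod (I0 \<Omega> \<epsilon>0 \<mu>0 \<alpha> Je Jm k)
             \<le> C * (1 + cmod k ^ 3) * (H1_norm_sq \<Omega> Je + H1_norm_sq \<Omega> Jm)
                 * exp (2 * diameter \<Omega> * sqrt (\<epsilon>0 * \<mu>0) * \<bar>Im k\<bar>)"
      by (simp add: NP_def D_def s_def)
  qed
qed

end
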